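(* Let $\Gamma$ be a countable group and all spaces below measure preserving $\Gamma$-actions. (1) If $(X,\mu)\xhookrightarrow{proj}(Y,\nu)\xhookrightarrow{proj}(Z,\tau)$ then $(X,\mu)\xhookrightarrow{proj}(Z,\tau)$. (2) If $(X,\mu)\xhookrightarrow{inf}(Y,\nu)\xhookrightarrow{proj}(Z,\tau)$ then $(X,\mu)\xhookrightarrow{inf}(Z,\tau)$. (3) If $(X,\mu)\xhookrightarrow{w}(Y,\nu)\xhookrightarrow{inf}(Z,\tau)$ then $(X,\mu)\xhookrightarrow{inf}(Z,\tau)$. (4) If $(X,\mu)$ is ergodic with $\mu(X)=\infty$, $(Y,\nu)$ is probability measure preserving, and $(X,\mu)\xhookrightarrow{proj}(Y,\nu)\xhookrightarrow{inf}(Z,\tau)$, then $(X,\mu)\xhookrightarrow{proj}(Z,\tau)$. (5) If $(X_1,\mu_1)\xhookrightarrow{proj}(Y_1,\nu_1)$ and $(X_2,\mu_2)\xhookrightarrow{proj}(Y_2,\nu_2)$, then $(X_1\times X_2,\mu_1\times\mu_2)\xhookrightarrow{proj}(Y_1\times Y_2,\nu_1\times\nu_2)$ (diagonal actions).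
   Context: A measure preserving action $(X,\mu)$ of a countable group $\Gamma$ is an action on a standard Borel space preserving a $\sigma$-finite measure. Weak containment $\xhookrightarrow{w}$: for every finite $F\subset\Gamma$, $k\in\mathbb N$, finite measure $A_1,\dots,A_k\subset X$ and $\varepsilon>0$ there exist $B_1,\dots,B_k\subset Y$ with $|\mu(A_i\cap\gamma A_j)-\nu(B_i\cap\gamma B_j)|\le\varepsilon\max_l\mu(A_l)$ for all $i,j$, $\gamma\in F$. Projective containment $\xhookrightarrow{proj}$: the same but with some $\lambda>0$ and $\lambda\nu(B_i\cap\gamma B_j)$ in place of $\nu(B_i\cap\gamma B_j)$. Infinitesimal containment $\xhookrightarrow{inf}$: for every finite $F$, $k$, $\varepsilon>0$ there is $\delta>0$ such that for all positive measure $A_1,\dots,A_k\subset X$ with $\mu(A_i)\le\delta$ there exist $\lambda>0$ and $B_1,\dots,B_k\subset Y$ with $|\mu(A_i\cap\gamma A_j)-\lambda\nu(B_i\cap\gamma B_j)|\le\varepsilon\max_l\mu(A_l)$ for all $i,j$, $\gamma\in F$. *)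

theory Defs
  imports "HOL-Probability.Probability"
begin

text \<open>The countable group \<Gamma> is a type of class group_add (written additively,
  not necessarily abelian) and countable.  A space is a Polish type with a measure
  on its Borel sets (standard Borel space), the action is a family of maps.\<close>

definition mp_action ::
  "('g::{group_add,countable} \<Rightarrow> 'x \<Rightarrow> 'x) \<Rightarrow> ('x::polish_space) measure \<Rightarrow> bool" where
  "mp_action a M \<longleftrightarrow>
     sets M = sets (borel :: 'x measure) \<and>
     sigma_finite_measure M \<and>
     a 0 = id \<and>
     (\<forall>g h. a (g + h) = a g \<circ> a h) \<and>
     (\<forall>g. a g \<in> M \<rightarrow>\<^sub>M M \<and>
          (\<forall>A \<in> sets M. emeasure M (a g -` A \<inter> space M) = emeasure M A))"

definition fin_sets :: "'x measure \<Rightarrow> 'x set set" where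
  "fin_sets M = {A \<in> sets M. emeasure M A < \<infinity>}"

definition maxmeas :: "'x measure \<Rightarrow> nat \<Rightarrow> (nat \<Rightarrow> 'x set) \<Rightarrow> real" where
  "maxmeas M k A = Max ((\<lambda>l. measure M (A l)) ` {..<k})"

definition weakly_contained ::
  "('g \<Rightarrow> 'x \<Rightarrow> 'x) \<Rightarrow> 'x measure \<Rightarrow> ('g \<Rightarrow> 'y \<Rightarrow> 'y) \<Rightarrow> 'y measure \<Rightarrow> bool" where
  "weakly_contained a M b N \<longleftrightarrow>
     (\<forall>F k A \<epsilon>. finite F \<longrightarrow> (\<forall>i<k. A i \<in> fin_sets M) \<longrightarrow> \<epsilon> > 0 \<longrightarrow>
        (\<exists>B. (\<forall>i<k. B i \<in> fin_sets N) \<and>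
           (\<forall>i<k. \<forall>j<k. \<forall>\<gamma>\<in>F.
              \<bar>measure M (A i \<inter> a \<gamma> ` A j) - measure N (B i \<inter> b \<gamma> ` B j)\<bar>
                \<le> \<epsilon> * maxmeas M k A)))"

definition proj_contained ::
  "('g \<Rightarrow> 'x \<Rightarrow> 'x) \<Rightarrow> 'x measure \<Rightarrow> ('g \<Rightarrow> 'y \<Rightarrow> 'y) \<Rightarrow> 'y measure \<Rightarrow> bool" where
  "proj_contained a M b N \<longleftrightarrow>
     (\<forall>F k A \<epsilon>. finite F \<longrightarrow> (\<forall>i<k. A i \<in> fin_sets M) \<longrightarrow> \<epsilon> > 0 \<longrightarrow>
        (\<exists>lam::real. \<exists>B. lam > 0 \<and> (\<forall>i<k. B i \<in> fin_sets N) \<and>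
           (\<forall>i<k. \<forall>j<k. \<forall>\<gamma>\<in>F.
              \<bar>measure M (A i \<inter> a \<gamma> ` A j) - lam * measure N (B i \<inter> b \<gamma> ` B j)\<bar>
                \<le> \<epsilon> * maxmeas M k A)))"

definition inf_contained ::
  "('g \<Rightarrow> 'x \<Rightarrow> 'x) \<Rightarrow> 'x measure \<Rightarrow> ('g \<Rightarrow> 'y \<Rightarrow> 'y) \<Rightarrow> 'y measure \<Rightarrow> bool" where
  "inf_contained a M b N \<longleftrightarrow>
     (\<forall>F k \<epsilon>. finite F \<longrightarrow> \<epsilon> > 0 \<longrightarrow>
        (\<exists>\<delta>::real. \<delta> > 0 \<and>
          (\<forall>A. (\<forall>i<k. A i \<in> sets M \<and> 0 < emeasure M (A i) \<and> emeasure M (A i) \<le> ennreal \<delta>) \<longrightarrow>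
            (\<exists>lam::real. \<exists>B. lam > 0 \<and> (\<forall>i<k. B i \<in> fin_sets N) \<and>
               (\<forall>i<k. \<forall>j<k. \<forall>\<gamma>\<in>F.
                  \<bar>measure M (A i \<inter> a \<gamma> ` A j) - lam * measure N (B i \<inter> b \<gamma> ` B j)\<bar>
                    \<le> \<epsilon> * maxmeas M k A)))))"

definition ergodic_action :: "('g \<Rightarrow> 'x \<Rightarrow> 'x) \<Rightarrow> 'x measure \<Rightarrow> bool" where
  "ergodic_action a M \<longleftrightarrow>
     (\<forall>A \<in> sets M. (\<forall>g. a g ` A = A) \<longrightarrow>
        emeasure M A = 0 \<or> emeasure M (space M - A) = 0)"

definition diag_action :: "('g \<Rightarrow> 'x \<Rightarrow> 'x) \<Rightarrow> ('g \<Rightarrow> 'y \<Rightarrow> 'y) \<Rightarrow> 'g \<Rightarrow> 'x \<times> 'y \<Rightarrow> 'x \<times> 'y" where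
  "diag_action a b g = (\<lambda>(x, y). (a g x, b g y))"

end

theory Submission
  imports Defs
begin


definition mpa :: "('g::{group_add,countable} \<Rightarrow> 'x \<Rightarrow> 'x) \<Rightarrow> 'x measure \<Rightarrow> bool" where
  "mpa a M \<longleftrightarrow>
     space M = UNIV \<and>
     sigma_finite_measure M \<and>
     a 0 = id \<and>
     (\<forall>g h. a (g + h) = a g \<circ> a h) \<and>
     (\<forall>g. a g \<in> M \<rightarrow>\<^sub>M M \<and>
          (\<forall>A \<in> sets M. emeasure M (a g -` A \<inter> space M) = emeasure M A))"

lemma mp_mpa: "mp_action a M \<Longrightarrow> mpa a M"
  unfolding mp_action_def mpa_def by (metis sets_eq_imp_space_eq space_borel)

lemma mpa_space: "mpa a M \<Longrightarrow> space M = UNIV"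
  unfolding mpa_def by blast

lemma mpa_zero: "mpa a M \<Longrightarrow> a 0 = id"
  unfolding mpa_def by blast

lemma mpa_img_eq:
  assumes "mpa a M" shows "a g ` S = a (-g) -` S"
proof -
  have c: "a (g + h) = a g \<circ> a h" for g h using assms unfolding mpa_def by blast
  have 1: "a g (a (-g) x) = x" for x using c[of g "-g"] mpa_zero[OF assms] by (metis comp_apply id_apply right_minus)
  have 2: "a (-g) (a g x) = x" for x using c[of "-g" g] mpa_zero[OF assms] by (metis comp_apply id_apply left_minus)
  show ?thesis using 1 2 by (auto simp: image_def) (metis)
qed

lemma mpa_inj: "mpa a M \<Longrightarrow> inj (a g)"
  using mpa_img_eq by (metis inj_on_inverseI mpa_def comp_apply id_apply left_minus)

lemma mpa_meas:
  assumes "mpa a M" shows "a g \<in> M \<rightarrow>\<^sub>M M"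
  using assms unfolding mpa_def by blast

lemma mpa_img_sets:
  assumes "mpa a M" "S \<in> sets M" shows "a g ` S \<in> sets M"
proof -
  have "a (-g) -` S \<inter> space M \<in> sets M" using measurable_sets[OF mpa_meas[OF assms(1)] assms(2)] .
  then show ?thesis using mpa_img_eq[OF assms(1)] mpa_space[OF assms(1)] by simp
qed

lemma mpa_img_emeasure:
  assumes "mpa a M" "S \<in> sets M" shows "emeasure M (a g ` S) = emeasure M S"
proof -
  have "emeasure M (a (-g) -` S \<inter> space M) = emeasure M S" using assms unfolding mpa_def by blast
  then show ?thesis using mpa_img_eq[OF assms(1)] mpa_space[OF assms(1)] by simp
qed

lemma mpa_img_measure:
  assumes "mpa a M" "S \<in> sets M" shows "measure M (a g ` S) = measure M S"
  using mpa_img_emeasure[OF assms] by (simp add: measure_def)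

lemma mpa_img_fin:
  assumes "mpa a M" "S \<in> fin_sets M" shows "a g ` S \<in> fin_sets M"
  using assms mpa_img_sets mpa_img_emeasure unfolding fin_sets_def by fastforce

lemma mpa_img_zero: "mpa a M \<Longrightarrow> a 0 ` S = S"
  using mpa_zero by fastforce

lemma mp_space: "mp_action a M \<Longrightarrow> space M = UNIV" using mpa_space mp_mpa by blast
lemma mp_zero: "mp_action a M \<Longrightarrow> a 0 = id" using mpa_zero mp_mpa by blast
lemma mp_meas: "mp_action a M \<Longrightarrow> a g \<in> M \<rightarrow>\<^sub>M M" using mpa_meas mp_mpa by blast
lemma mp_img_sets: "mp_action a M \<Longrightarrow> S \<in> sets M \<Longrightarrow> a g ` S \<in> sets M" using mpa_img_sets mp_mpa by blast
lemma mp_img_measure: "mp_action a M \<Longrightarrow> S \<in> sets M \<Longrightarrow> measure M (a g ` S) = measure M S" using mpa_img_measure mp_mpa by blast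
lemma mp_img_zero: "mp_action a M \<Longrightarrow> a 0 ` S = S" using mpa_img_zero mp_mpa by blast

lemma maxmeas_ge: "i < k \<Longrightarrow> measure M (A i) \<le> maxmeas M k A"
  unfolding maxmeas_def by (rule Max_ge) auto

lemma maxmeas_le: "0 < k \<Longrightarrow> (\<And>i. i < k \<Longrightarrow> measure M (A i) \<le> c) \<Longrightarrow> maxmeas M k A \<le> c"
  unfolding maxmeas_def by (subst Max_le_iff) auto

lemma maxmeas_nonneg: "0 < k \<Longrightarrow> 0 \<le> maxmeas M k A"
  using maxmeas_ge[of 0 k M A] by (meson measure_nonneg order_trans)

lemma fin_sets_eq: "fin_sets M = fmeasurable M"
  unfolding fin_sets_def fmeasurable_def by simp

lemma pos_meas:
  assumes "0 < emeasure M S" "emeasure M S \<le> ennreal d"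
  shows "0 < measure M S" "measure M S \<le> d"
proof -
  have f: "emeasure M S < \<infinity>" using assms(2) by (simp add: le_less_trans)
  then show "0 < measure M S" using assms(1) unfolding measure_def
    by (simp add: enn2real_positive_iff)
  have "0 \<le> d"
  proof (rule ccontr)
    assume "\<not> 0 \<le> d" then have "ennreal d = 0" by (simp add: ennreal_neg)
    then show False using assms by simp
  qed
  have "enn2real (emeasure M S) \<le> enn2real (ennreal d)" using assms(2) by (intro enn2real_mono) auto
  then show "measure M S \<le> d" using \<open>0 \<le> d\<close> by (simp add: measure_def)
qed


lemma chain:
  assumes X: "mp_action a M" and Y: "mp_action b N" and k: "0 < k"
    and l1: "lam1 > 0" and l2: "lam2 > 0" and e1: "e1 \<ge> 0" and e2: "e2 \<ge> 0"
    and h1: "\<forall>i<k. \<forall>j<k. \<forall>\<gamma>\<in>insert 0 F. \<bar>measure M (A i \<inter> a \<gamma> ` A j) - lam1 * measure N (B i \<inter> b \<gamma> ` B j)\<bar> \<le> e1 * maxmeas M k A"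
    and h2: "\<forall>i<k. \<forall>j<k. \<forall>\<gamma>\<in>F. \<bar>measure N (B i \<inter> b \<gamma> ` B j) - lam2 * measure T (C i \<inter> c \<gamma> ` C j)\<bar> \<le> e2 * maxmeas N k B"
  shows "\<forall>i<k. \<forall>j<k. \<forall>\<gamma>\<in>F. \<bar>measure M (A i \<inter> a \<gamma> ` A j) - (lam1 * lam2) * measure T (C i \<inter> c \<gamma> ` C j)\<bar> \<le> (e1 + e2 * (1 + e1)) * maxmeas M k A"
proof (intro allI impI ballI)
  define mA where "mA = maxmeas M k A"
  have mA0: "0 \<le> mA" using maxmeas_nonneg[OF k] mA_def by simp
  have bi: "lam1 * measure N (B i) \<le> (1 + e1) * mA" if "i < k" for i
  proof -
    have "\<bar>measure M (A i) - lam1 * measure N (B i)\<bar> \<le> e1 * mA"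
      using h1 that mp_img_zero[OF X] mp_img_zero[OF Y] mA_def by (metis Int_absorb insertI1)
    moreover have "measure M (A i) \<le> mA" using maxmeas_ge[OF that] mA_def by simp
    ultimately show ?thesis by (simp add: algebra_simps)
  qed
  have mB: "lam1 * maxmeas N k B \<le> (1 + e1) * mA"
  proof -
    have "maxmeas N k B \<le> (1 + e1) * mA / lam1"
      using bi l1 by (intro maxmeas_le[OF k]) (simp add: field_simps)
    then show ?thesis using l1 by (simp add: field_simps)
  qed
  fix i j \<gamma> assume ij: "i < k" "j < k" and g: "\<gamma> \<in> F"
  define x where "x = measure M (A i \<inter> a \<gamma> ` A j)"
  define y where "y = measure N (B i \<inter> b \<gamma> ` B j)"
  define z where "z = measure T (C i \<inter> c \<gamma> ` C j)"
  have 1: "\<bar>x - lam1 * y\<bar> \<le> e1 * mA" using h1 ij g unfolding x_def y_def mA_def by blast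
  have 2: "\<bar>y - lam2 * z\<bar> \<le> e2 * maxmeas N k B" using h2 ij g unfolding z_def y_def by blast
  have "\<bar>lam1 * y - lam1 * lam2 * z\<bar> = lam1 * \<bar>y - lam2 * z\<bar>"
    using l1 by (simp add: abs_mult right_diff_distrib[symmetric] mult.assoc)
  also have "\<dots> \<le> lam1 * (e2 * maxmeas N k B)" using 2 l1 by simp
  also have "\<dots> = e2 * (lam1 * maxmeas N k B)" by simp
  also have "\<dots> \<le> e2 * ((1 + e1) * mA)" using mB e2 by (rule mult_left_mono)
  finally have 3: "\<bar>lam1 * y - lam1 * lam2 * z\<bar> \<le> e2 * ((1 + e1) * mA)" .
  have "\<bar>x - lam1 * lam2 * z\<bar> \<le> e1 * mA + e2 * ((1 + e1) * mA)" using 1 3 by linarith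
  then show "\<bar>measure M (A i \<inter> a \<gamma> ` A j) - (lam1 * lam2) * measure T (C i \<inter> c \<gamma> ` C j)\<bar> \<le> (e1 + e2 * (1 + e1)) * maxmeas M k A"
    unfolding x_def z_def mA_def by (simp add: algebra_simps)
qed


lemma eps_arith: "(\<epsilon>::real) > 0 \<Longrightarrow> \<epsilon>/2 + \<epsilon>/(2+\<epsilon>) * (1 + \<epsilon>/2) = \<epsilon>"
  by (simp add: field_simps)

lemma part1:
  fixes a :: "'g::{group_add,countable} \<Rightarrow> 'x::polish_space \<Rightarrow> 'x" and b :: "'g \<Rightarrow> 'y::polish_space \<Rightarrow> 'y"
    and c :: "'g \<Rightarrow> 'z::polish_space \<Rightarrow> 'z"
  assumes X: "mp_action a M" and Y: "mp_action b N"
    and h1: "proj_contained a M b N" and h2: "proj_contained b N c T"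
  shows "proj_contained a M c T"
  unfolding proj_contained_def
proof (intro allI impI)
  fix F :: "'g set" and k :: nat and A :: "nat \<Rightarrow> 'x set" and \<epsilon> :: real
  assume F: "finite F" and A: "\<forall>i<k. A i \<in> fin_sets M" and e: "0 < \<epsilon>"
  show "\<exists>lam B. 0 < lam \<and> (\<forall>i<k. B i \<in> fin_sets T) \<and> (\<forall>i<k. \<forall>j<k. \<forall>\<gamma>\<in>F.
          \<bar>measure M (A i \<inter> a \<gamma> ` A j) - lam * measure T (B i \<inter> c \<gamma> ` B j)\<bar> \<le> \<epsilon> * maxmeas M k A)"
  proof (cases "k = 0")
    case True then show ?thesis by (intro exI[of _ 1]) auto
  next
    case False
    then have k: "0 < k" by simp
    obtain lam1 B where l1: "lam1 > 0" and B: "\<forall>i<k. B i \<in> fin_sets N"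
      and hb: "\<forall>i<k. \<forall>j<k. \<forall>\<gamma>\<in>insert 0 F. \<bar>measure M (A i \<inter> a \<gamma> ` A j) - lam1 * measure N (B i \<inter> b \<gamma> ` B j)\<bar> \<le> (\<epsilon>/2) * maxmeas M k A"
      using h1 F A e unfolding proj_contained_def
      by (metis (no_types, lifting) finite_insert half_gt_zero)
    obtain lam2 C where l2: "lam2 > 0" and C: "\<forall>i<k. C i \<in> fin_sets T"
      and hc: "\<forall>i<k. \<forall>j<k. \<forall>\<gamma>\<in>F. \<bar>measure N (B i \<inter> b \<gamma> ` B j) - lam2 * measure T (C i \<inter> c \<gamma> ` C j)\<bar> \<le> (\<epsilon>/(2+\<epsilon>)) * maxmeas N k B"
      using h2[unfolded proj_contained_def, rule_format, of F k B "\<epsilon>/(2+\<epsilon>)"] F B e by auto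
    have "\<forall>i<k. \<forall>j<k. \<forall>\<gamma>\<in>F. \<bar>measure M (A i \<inter> a \<gamma> ` A j) - (lam1 * lam2) * measure T (C i \<inter> c \<gamma> ` C j)\<bar> \<le> (\<epsilon>/2 + \<epsilon>/(2+\<epsilon>) * (1 + \<epsilon>/2)) * maxmeas M k A"
      by (rule chain[OF X Y k l1 l2 _ _ hb hc]) (use e in auto)
    then show ?thesis using l1 l2 C eps_arith[OF e] by (intro exI[of _ "lam1*lam2"] exI[of _ C]) auto
  qed
qed

lemma part2:
  fixes a :: "'g::{group_add,countable} \<Rightarrow> 'x::polish_space \<Rightarrow> 'x" and b :: "'g \<Rightarrow> 'y::polish_space \<Rightarrow> 'y"
    and c :: "'g \<Rightarrow> 'z::polish_space \<Rightarrow> 'z"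
  assumes X: "mp_action a M" and Y: "mp_action b N"
    and h1: "inf_contained a M b N" and h2: "proj_contained b N c T"
  shows "inf_contained a M c T"
  unfolding inf_contained_def
proof (intro allI impI)
  fix F :: "'g set" and k :: nat and \<epsilon> :: real
  assume F: "finite F" and e: "0 < \<epsilon>"
  obtain \<delta> where d: "\<delta> > 0" and hd: "\<forall>A. (\<forall>i<k. A i \<in> sets M \<and> 0 < emeasure M (A i) \<and> emeasure M (A i) \<le> ennreal \<delta>) \<longrightarrow>
            (\<exists>lam B. lam > 0 \<and> (\<forall>i<k. B i \<in> fin_sets N) \<and>
               (\<forall>i<k. \<forall>j<k. \<forall>\<gamma>\<in>insert 0 F.
                  \<bar>measure M (A i \<inter> a \<gamma> ` A j) - lam * measure N (B i \<inter> b \<gamma> ` B j)\<bar>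
                    \<le> (\<epsilon>/2) * maxmeas M k A))"
    using h1[unfolded inf_contained_def, rule_format, of "insert 0 F" "\<epsilon>/2" k] F e by auto
  show "\<exists>\<delta>>0. \<forall>A. (\<forall>i<k. A i \<in> sets M \<and> 0 < emeasure M (A i) \<and> emeasure M (A i) \<le> ennreal \<delta>) \<longrightarrow>
            (\<exists>lam B. lam > 0 \<and> (\<forall>i<k. B i \<in> fin_sets T) \<and>
               (\<forall>i<k. \<forall>j<k. \<forall>\<gamma>\<in>F.
                  \<bar>measure M (A i \<inter> a \<gamma> ` A j) - lam * measure T (B i \<inter> c \<gamma> ` B j)\<bar>
                    \<le> \<epsilon> * maxmeas M k A))"
  proof (rule exI[of _ \<delta>], intro conjI d allI impI)
    fix A :: "nat \<Rightarrow> 'x set" assume A: "\<forall>i<k. A i \<in> sets M \<and> 0 < emeasure M (A i) \<and> emeasure M (A i) \<le> ennreal \<delta>"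
    show "\<exists>lam B. lam > 0 \<and> (\<forall>i<k. B i \<in> fin_sets T) \<and>
               (\<forall>i<k. \<forall>j<k. \<forall>\<gamma>\<in>F.
                  \<bar>measure M (A i \<inter> a \<gamma> ` A j) - lam * measure T (B i \<inter> c \<gamma> ` B j)\<bar>
                    \<le> \<epsilon> * maxmeas M k A)"
    proof (cases "k = 0")
      case True then show ?thesis by (intro exI[of _ 1]) auto
    next
      case False
      then have k: "0 < k" by simp
      obtain lam1 B where l1: "lam1 > 0" and B: "\<forall>i<k. B i \<in> fin_sets N"
        and hb: "\<forall>i<k. \<forall>j<k. \<forall>\<gamma>\<in>insert 0 F. \<bar>measure M (A i \<inter> a \<gamma> ` A j) - lam1 * measure N (B i \<inter> b \<gamma> ` B j)\<bar> \<le> (\<epsilon>/2) * maxmeas M k A"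
        using hd A by blast
      obtain lam2 C where l2: "lam2 > 0" and C: "\<forall>i<k. C i \<in> fin_sets T"
        and hc: "\<forall>i<k. \<forall>j<k. \<forall>\<gamma>\<in>F. \<bar>measure N (B i \<inter> b \<gamma> ` B j) - lam2 * measure T (C i \<inter> c \<gamma> ` C j)\<bar> \<le> (\<epsilon>/(2+\<epsilon>)) * maxmeas N k B"
        using h2[unfolded proj_contained_def, rule_format, of F k B "\<epsilon>/(2+\<epsilon>)"] F B e by auto
      have "\<forall>i<k. \<forall>j<k. \<forall>\<gamma>\<in>F. \<bar>measure M (A i \<inter> a \<gamma> ` A j) - (lam1 * lam2) * measure T (C i \<inter> c \<gamma> ` C j)\<bar> \<le> (\<epsilon>/2 + \<epsilon>/(2+\<epsilon>) * (1 + \<epsilon>/2)) * maxmeas M k A"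
        by (rule chain[OF X Y k l1 l2 _ _ hb hc]) (use e in auto)
      then show ?thesis using l1 l2 C eps_arith[OF e] by (intro exI[of _ "lam1*lam2"] exI[of _ C]) auto
    qed
  qed
qed


lemma part3:
  fixes a :: "'g::{group_add,countable} \<Rightarrow> 'x::polish_space \<Rightarrow> 'x" and b :: "'g \<Rightarrow> 'y::polish_space \<Rightarrow> 'y"
    and c :: "'g \<Rightarrow> 'z::polish_space \<Rightarrow> 'z"
  assumes X: "mp_action a M" and Y: "mp_action b N"
    and h1: "weakly_contained a M b N" and h2: "inf_contained b N c T"
  shows "inf_contained a M c T"
  unfolding inf_contained_def
proof (intro allI impI)
  fix F :: "'g set" and k :: nat and \<epsilon> :: real
  assume F: "finite F" and e: "0 < \<epsilon>"
  define e2 where "e2 = \<epsilon>/(2+\<epsilon>)"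
  have e2: "e2 > 0" using e by (simp add: e2_def)
  obtain \<delta> where d: "\<delta> > 0" and hd: "\<forall>B. (\<forall>i<k. B i \<in> sets N \<and> 0 < emeasure N (B i) \<and> emeasure N (B i) \<le> ennreal \<delta>) \<longrightarrow>
            (\<exists>lam C. lam > 0 \<and> (\<forall>i<k. C i \<in> fin_sets T) \<and>
               (\<forall>i<k. \<forall>j<k. \<forall>\<gamma>\<in>F.
                  \<bar>measure N (B i \<inter> b \<gamma> ` B j) - lam * measure T (C i \<inter> c \<gamma> ` C j)\<bar>
                    \<le> e2 * maxmeas N k B))"
    using h2[unfolded inf_contained_def, rule_format, of F e2 k] F e2 by auto
  show "\<exists>\<delta>>0. \<forall>A. (\<forall>i<k. A i \<in> sets M \<and> 0 < emeasure M (A i) \<and> emeasure M (A i) \<le> ennreal \<delta>) \<longrightarrow>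
            (\<exists>lam B. lam > 0 \<and> (\<forall>i<k. B i \<in> fin_sets T) \<and>
               (\<forall>i<k. \<forall>j<k. \<forall>\<gamma>\<in>F.
                  \<bar>measure M (A i \<inter> a \<gamma> ` A j) - lam * measure T (B i \<inter> c \<gamma> ` B j)\<bar>
                    \<le> \<epsilon> * maxmeas M k A))"
  proof (rule exI[of _ "\<delta>/2"], intro conjI allI impI)
    show "0 < \<delta>/2" using d by simp
    fix A :: "nat \<Rightarrow> 'x set" assume A: "\<forall>i<k. A i \<in> sets M \<and> 0 < emeasure M (A i) \<and> emeasure M (A i) \<le> ennreal (\<delta>/2)"
    show "\<exists>lam B. lam > 0 \<and> (\<forall>i<k. B i \<in> fin_sets T) \<and>
               (\<forall>i<k. \<forall>j<k. \<forall>\<gamma>\<in>F.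
                  \<bar>measure M (A i \<inter> a \<gamma> ` A j) - lam * measure T (B i \<inter> c \<gamma> ` B j)\<bar>
                    \<le> \<epsilon> * maxmeas M k A)"
    proof (cases "k = 0")
      case True then show ?thesis by (intro exI[of _ 1]) auto
    next
      case False
      then have k: "0 < k" by simp
      have Apos: "0 < measure M (A i)" and Ale: "measure M (A i) \<le> \<delta>/2" if "i < k" for i
        using pos_meas[of M "A i" "\<delta>/2"] A that by auto
      have Afin: "A i \<in> fin_sets M" if "i < k" for i
        using A that unfolding fin_sets_def by (auto simp: le_less_trans)
      define mA where "mA = maxmeas M k A"
      have mApos: "0 < mA" using Apos[OF k] maxmeas_ge[OF k, of M A] mA_def by linarith
      have mAle: "mA \<le> \<delta>/2" using maxmeas_le[OF k, of M A] Ale mA_def by blast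
      define t where "t = Min ((\<lambda>i. measure M (A i)) ` {..<k})"
      have tpos: "0 < t" unfolding t_def using Apos k by (subst Min_gr_iff) auto
      have tle: "t \<le> measure M (A i)" if "i < k" for i unfolding t_def using that by (intro Min_le) auto
      define ew where "ew = min (min (\<epsilon>/2) (1/2)) (t/(2*mA))"
      have ew: "0 < ew" "ew \<le> \<epsilon>/2" "ew \<le> 1/2" "ew * mA \<le> t/2"
      proof -
        show "0 < ew" using e tpos mApos by (simp add: ew_def)
        show "ew \<le> \<epsilon>/2" "ew \<le> 1/2" by (auto simp: ew_def)
        have "ew \<le> t/(2*mA)" by (simp add: ew_def)
        then have "ew * mA \<le> t/(2*mA) * mA" using mApos by (intro mult_right_mono) auto
        then show "ew * mA \<le> t/2" using mApos by simp
      qed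
      obtain B where B: "\<forall>i<k. B i \<in> fin_sets N"
        and hb: "\<forall>i<k. \<forall>j<k. \<forall>\<gamma>\<in>insert 0 F. \<bar>measure M (A i \<inter> a \<gamma> ` A j) - measure N (B i \<inter> b \<gamma> ` B j)\<bar> \<le> ew * mA"
        using h1[unfolded weakly_contained_def, rule_format, of "insert 0 F" k A ew] F Afin ew(1) mA_def by auto
      have Bm: "\<bar>measure M (A i) - measure N (B i)\<bar> \<le> ew * mA" if "i < k" for i
        using hb that mp_img_zero[OF X] mp_img_zero[OF Y] by (metis Int_absorb insertI1)
      have Bcond: "B i \<in> sets N \<and> 0 < emeasure N (B i) \<and> emeasure N (B i) \<le> ennreal \<delta>" if "i < k" for i
      proof -
        have fin: "B i \<in> fmeasurable N" using B that fin_sets_eq by blast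
        have "0 < measure N (B i)" using Bm[OF that] tle[OF that] ew(4) tpos by linarith
        moreover have "measure N (B i) \<le> \<delta>" proof -
          have "ew * mA \<le> (1/2) * (\<delta>/2)" using ew(1,3) mAle mApos by (intro mult_mono) auto
          then show ?thesis using Bm[OF that] Ale[OF that] by linarith
        qed
        ultimately show ?thesis using fin emeasure_eq_measure2[OF fin] by (auto intro: ennreal_leI)
      qed
      obtain lam2 C where l2: "lam2 > 0" and C: "\<forall>i<k. C i \<in> fin_sets T"
        and hc: "\<forall>i<k. \<forall>j<k. \<forall>\<gamma>\<in>F. \<bar>measure N (B i \<inter> b \<gamma> ` B j) - lam2 * measure T (C i \<inter> c \<gamma> ` C j)\<bar> \<le> e2 * maxmeas N k B"
        using hd Bcond by blast
      have hb': "\<forall>i<k. \<forall>j<k. \<forall>\<gamma>\<in>insert 0 F. \<bar>measure M (A i \<inter> a \<gamma> ` A j) - 1 * measure N (B i \<inter> b \<gamma> ` B j)\<bar> \<le> ew * maxmeas M k A"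
        using hb mA_def by simp
      have "\<forall>i<k. \<forall>j<k. \<forall>\<gamma>\<in>F. \<bar>measure M (A i \<inter> a \<gamma> ` A j) - (1 * lam2) * measure T (C i \<inter> c \<gamma> ` C j)\<bar> \<le> (ew + e2 * (1 + ew)) * maxmeas M k A"
        by (rule chain[OF X Y k _ l2 _ _ hb' hc]) (use ew e2 in auto)
      moreover have "(ew + e2 * (1 + ew)) * mA \<le> \<epsilon> * mA"
      proof -
        have "ew + e2 * (1 + ew) \<le> \<epsilon>/2 + e2 * (1 + \<epsilon>/2)" using ew e2 by (simp add: add_mono mult_left_mono)
        also have "\<dots> = \<epsilon>" unfolding e2_def using e by (simp add: field_simps)
        finally show ?thesis using mApos by simp
      qed
      ultimately have "\<forall>i<k. \<forall>j<k. \<forall>\<gamma>\<in>F. \<bar>measure M (A i \<inter> a \<gamma> ` A j) - lam2 * measure T (C i \<inter> c \<gamma> ` C j)\<bar> \<le> \<epsilon> * maxmeas M k A"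
        unfolding mA_def by (metis (no_types, lifting) mult_1 order_trans)
      then show ?thesis using l2 C by blast
    qed
  qed
qed


lemma big_fin_set:
  assumes X: "mp_action a M" and inf: "emeasure M (space M) = \<infinity>" and C: "0 \<le> C"
  shows "\<exists>W. W \<in> fin_sets M \<and> measure M W > C"
proof -
  interpret sigma_finite_measure M using X unfolding mp_action_def by blast
  obtain Z where Z: "Z \<in> sets M" "emeasure M Z < \<infinity>" "emeasure M Z > ennreal C"
    using approx_PInf_emeasure_with_finite[OF sets.top inf, of C] by blast
  have "emeasure M Z = ennreal (measure M Z)" using Z by (intro emeasure_eq_measure2 fmeasurableI)
  then have "ennreal C < ennreal (measure M Z)" using Z by simp
  then have "measure M Z > C" using C by (simp add: ennreal_less_iff)
  then show ?thesis using Z unfolding fin_sets_def by blast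
qed

lemma ysmall:
  fixes a :: "'g::{group_add,countable} \<Rightarrow> 'x::polish_space \<Rightarrow> 'x" and b :: "'g \<Rightarrow> 'y::polish_space \<Rightarrow> 'y"
  assumes X: "mp_action a M" and Y: "mp_action b N" and inf: "emeasure M (space M) = \<infinity>"
    and Pr: "prob_space N" and h: "proj_contained a M b N" and t: "0 < t"
  shows "\<exists>E \<in> sets N. 0 < measure N E \<and> measure N E \<le> t"
proof -
  obtain P where P: "P \<in> fin_sets M" "measure M P > 0" using big_fin_set[OF X inf, of 0] by auto
  define p where "p = measure M P"
  obtain W where W: "W \<in> fin_sets M" "measure M W > max p (3*p/t)" using big_fin_set[OF X inf, of "max p (3*p/t)"] P(2) p_def t by (auto simp: le_max_iff_disj)
  define L where "L = measure M W"
  have p0: "p > 0" using P p_def by simp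
  have Lp: "L \<ge> p" "L \<ge> 3*p/t" using W L_def by auto
  define A where "A = (\<lambda>i::nat. if i = 0 then P else W)"
  have A: "\<forall>i<2. A i \<in> fin_sets M" using P W A_def by auto
  have mA: "maxmeas M 2 A = L"
  proof (rule antisym)
    show "maxmeas M 2 A \<le> L" by (rule maxmeas_le) (use Lp in \<open>auto simp: A_def p_def L_def less_2_cases_iff\<close>)
    show "L \<le> maxmeas M 2 A" using maxmeas_ge[of 1 2 M A] by (simp add: A_def L_def)
  qed
  have e: "0 < p / (2*L)" using p0 Lp by simp
  obtain lam B where l: "lam > 0" and B: "\<forall>i<2. B i \<in> fin_sets N"
    and hb: "\<forall>i<2. \<forall>j<2. \<forall>\<gamma>\<in>{0}. \<bar>measure M (A i \<inter> a \<gamma> ` A j) - lam * measure N (B i \<inter> b \<gamma> ` B j)\<bar> \<le> (p/(2*L)) * maxmeas M 2 A"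
    using h[unfolded proj_contained_def, rule_format, of "{0}" 2 A "p/(2*L)"] A e by auto
  have err: "(p/(2*L)) * maxmeas M 2 A = p/2" using mA p0 Lp by simp
  have "\<bar>measure M (A 0 \<inter> a 0 ` A 0) - lam * measure N (B 0 \<inter> b 0 ` B 0)\<bar> \<le> (p/(2*L)) * maxmeas M 2 A"
    using hb by auto
  then have h0: "\<bar>p - lam * measure N (B 0)\<bar> \<le> p/2"
    unfolding err mp_img_zero[OF X] mp_img_zero[OF Y] by (simp add: A_def p_def)
  have "\<bar>measure M (A 1 \<inter> a 0 ` A 1) - lam * measure N (B 1 \<inter> b 0 ` B 1)\<bar> \<le> (p/(2*L)) * maxmeas M 2 A"
    using hb by auto
  then have h1: "\<bar>L - lam * measure N (B 1)\<bar> \<le> p/2"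
    unfolding err mp_img_zero[OF X] mp_img_zero[OF Y] by (simp add: A_def L_def)
  have "measure N (B 1) \<le> 1" using prob_space.prob_le_1[OF Pr] by simp
  then have "lam * measure N (B 1) \<le> lam" using l by simp
  then have lamL: "lam \<ge> L/2" using h1 Lp by linarith
  have Lpos: "L > 0" using Lp p0 by linarith
  have "0 < lam * measure N (B 0)" using h0 p0 by linarith
  then have pos: "0 < measure N (B 0)" using l by (simp add: zero_less_mult_iff)
  have "lam * measure N (B 0) \<le> 3*p/2" using h0 by linarith
  then have "measure N (B 0) \<le> (3*p/2) / lam" using l by (simp add: field_simps)
  also have "\<dots> \<le> (3*p/2) / (L/2)" using lamL Lpos p0 by (intro divide_left_mono) auto
  also have "\<dots> = 3*p/L" using Lpos by simp
  also have "\<dots> \<le> t" using Lp(2) Lpos t by (simp add: field_simps)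
  finally show ?thesis using pos B unfolding fin_sets_def by auto
qed


lemma union_small:
  assumes Y: "mp_action b N" and Fm: "finite_measure N"
    and S: "S \<in> sets N" and S': "S' \<in> sets N" and E: "E \<in> sets N"
  shows "\<bar>measure N ((S \<union> E) \<inter> b g ` (S' \<union> E)) - measure N (S \<inter> b g ` S')\<bar> \<le> 2 * measure N E"
proof -
  interpret finite_measure N by (rule Fm)
  have sets: "b g ` S' \<in> sets N" "b g ` E \<in> sets N" using mp_img_sets[OF Y] S' E by auto
  have im: "b g ` (S' \<union> E) = b g ` S' \<union> b g ` E" by auto
  have "measure N (S \<inter> b g ` S') \<le> measure N ((S \<union> E) \<inter> b g ` (S' \<union> E))"
    using S S' E sets unfolding im by (intro finite_measure_mono) auto
  moreover have "measure N ((S \<union> E) \<inter> b g ` (S' \<union> E)) \<le> measure N ((S \<inter> b g ` S') \<union> E \<union> b g ` E)"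
    using S S' E sets unfolding im by (intro finite_measure_mono) auto
  moreover have "measure N ((S \<inter> b g ` S') \<union> E \<union> b g ` E) \<le> measure N (S \<inter> b g ` S') + measure N E + measure N (b g ` E)"
    using S E sets measure_Un_le by (smt (verit, ccfv_threshold) sets.Int sets.Un)
  moreover have "measure N (b g ` E) = measure N E" using mp_img_measure[OF Y E] .
  ultimately show ?thesis by linarith
qed


lemma part4:
  fixes a :: "'g::{group_add,countable} \<Rightarrow> 'x::polish_space \<Rightarrow> 'x" and b :: "'g \<Rightarrow> 'y::polish_space \<Rightarrow> 'y"
    and c :: "'g \<Rightarrow> 'z::polish_space \<Rightarrow> 'z"
  assumes X: "mp_action a M" and Y: "mp_action b N" and inf: "emeasure M (space M) = \<infinity>"
    and Pr: "prob_space N" and h1: "proj_contained a M b N" and h2: "inf_contained b N c T"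
  shows "proj_contained a M c T"
  unfolding proj_contained_def
proof (intro allI impI)
  fix F :: "'g set" and k :: nat and A :: "nat \<Rightarrow> 'x set" and \<epsilon> :: real
  assume F: "finite F" and A: "\<forall>i<k. A i \<in> fin_sets M" and e: "0 < \<epsilon>"
  interpret N: prob_space N by (rule Pr)
  show "\<exists>lam B. 0 < lam \<and> (\<forall>i<k. B i \<in> fin_sets T) \<and> (\<forall>i<k. \<forall>j<k. \<forall>\<gamma>\<in>F.
          \<bar>measure M (A i \<inter> a \<gamma> ` A j) - lam * measure T (B i \<inter> c \<gamma> ` B j)\<bar> \<le> \<epsilon> * maxmeas M k A)"
  proof (cases "k = 0")
    case True then show ?thesis by (intro exI[of _ 1]) auto
  next
    case False
    then have k: "0 < k" by simp
    define mA where "mA = maxmeas M k A"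
    have mA0: "0 \<le> mA" using maxmeas_nonneg[OF k] mA_def by simp
    have Ale: "measure M (A i) \<le> mA" if "i < k" for i using maxmeas_ge[OF that] mA_def by simp
    have Aint: "measure M (A i \<inter> a \<gamma> ` A j) \<le> measure M (A i)" if "i < k" "j < k" for i j \<gamma>
      using A that mp_img_sets[OF X] fin_sets_eq
      by (intro measure_mono_fmeasurable) (auto simp: fin_sets_def fmeasurable_def)
    show ?thesis
    proof (cases "mA = 0")
      case True
      have "\<forall>i<k. \<forall>j<k. \<forall>\<gamma>\<in>F. \<bar>measure M (A i \<inter> a \<gamma> ` A j) - 1 * measure T ({} \<inter> c \<gamma> ` {})\<bar> \<le> \<epsilon> * maxmeas M k A"
      proof (intro allI impI ballI)
        fix i j \<gamma> assume ij: "i < k" "j < k"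
        have "measure M (A i \<inter> a \<gamma> ` A j) \<le> 0" using Aint[OF ij, of \<gamma>] Ale[OF ij(1)] True by linarith
        then show "\<bar>measure M (A i \<inter> a \<gamma> ` A j) - 1 * measure T ({} \<inter> c \<gamma> ` {})\<bar> \<le> \<epsilon> * maxmeas M k A"
          using True mA_def by simp
      qed
      then show ?thesis by (intro exI[of _ 1] exI[of _ "\<lambda>_. {}"]) (auto simp: fin_sets_def)
    next
      case False
      then have mApos: "0 < mA" using mA0 by simp
      define \<eta> where "\<eta> = min (\<epsilon>/8) (1/8)"
      have eta: "0 < \<eta>" "\<eta> \<le> \<epsilon>/8" "\<eta> \<le> 1/8" using e by (auto simp: \<eta>_def)
      define e2 where "e2 = \<epsilon>/4"
      have e2: "0 < e2" using e by (simp add: e2_def)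
      obtain \<delta> where d: "\<delta> > 0" and hd: "\<forall>B. (\<forall>i<k. B i \<in> sets N \<and> 0 < emeasure N (B i) \<and> emeasure N (B i) \<le> ennreal \<delta>) \<longrightarrow>
            (\<exists>lam C. lam > 0 \<and> (\<forall>i<k. C i \<in> fin_sets T) \<and>
               (\<forall>i<k. \<forall>j<k. \<forall>\<gamma>\<in>F.
                  \<bar>measure N (B i \<inter> b \<gamma> ` B j) - lam * measure T (C i \<inter> c \<gamma> ` C j)\<bar>
                    \<le> e2 * maxmeas N k B))"
        using h2[unfolded inf_contained_def, rule_format, of F e2 k] F e2 by auto
      obtain W where W: "W \<in> fin_sets M" "measure M W > max mA (8*mA/\<delta>)"
        using big_fin_set[OF X inf, of "max mA (8*mA/\<delta>)"] mA0 by (auto simp: le_max_iff_disj)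
      define L where "L = measure M W"
      have L: "L > mA" "L > 8*mA/\<delta>" using W L_def by auto
      have Lpos: "L > 0" using L mA0 by linarith
      define A' where "A' = (\<lambda>i. if i < k then A i else W)"
      have A': "\<forall>i<Suc k. A' i \<in> fin_sets M" using A W A'_def by auto
      have mA': "maxmeas M (Suc k) A' = L"
      proof (rule antisym)
        show "maxmeas M (Suc k) A' \<le> L"
        proof (rule maxmeas_le)
          fix i assume "i < Suc k"
          show "measure M (A' i) \<le> L"
          proof (cases "i < k")
            case True then show ?thesis using Ale[OF True] L A'_def by simp
          next
            case False then show ?thesis using A'_def L_def by simp
          qed
        qed simp
        show "L \<le> maxmeas M (Suc k) A'" using maxmeas_ge[of k "Suc k" M A'] by (simp add: A'_def L_def)
      qed
      define \<epsilon>1 where "\<epsilon>1 = \<eta> * mA / L"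
      have e1: "0 < \<epsilon>1" using eta mApos Lpos by (simp add: \<epsilon>1_def)
      have err: "\<epsilon>1 * maxmeas M (Suc k) A' = \<eta> * mA" using Lpos by (simp add: mA' \<epsilon>1_def)
      obtain lam1 B where l1: "lam1 > 0" and B: "\<forall>i<Suc k. B i \<in> fin_sets N"
        and hb: "\<forall>i<Suc k. \<forall>j<Suc k. \<forall>\<gamma>\<in>insert 0 F. \<bar>measure M (A' i \<inter> a \<gamma> ` A' j) - lam1 * measure N (B i \<inter> b \<gamma> ` B j)\<bar> \<le> \<epsilon>1 * maxmeas M (Suc k) A'"
        using h1[unfolded proj_contained_def, rule_format, of "insert 0 F" "Suc k" A' \<epsilon>1] F A' e1 by auto
      have hb1: "\<bar>measure M (A i \<inter> a \<gamma> ` A j) - lam1 * measure N (B i \<inter> b \<gamma> ` B j)\<bar> \<le> \<eta> * mA"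
        if "i < k" "j < k" "\<gamma> \<in> insert 0 F" for i j \<gamma>
        using hb[rule_format, of i j \<gamma>] that err by (simp add: A'_def)
      have "\<bar>measure M (A' k \<inter> a 0 ` A' k) - lam1 * measure N (B k \<inter> b 0 ` B k)\<bar> \<le> \<epsilon>1 * maxmeas M (Suc k) A'"
        using hb by blast
      then have hW: "\<bar>L - lam1 * measure N (B k)\<bar> \<le> \<eta> * mA"
        unfolding err mp_img_zero[OF X] mp_img_zero[OF Y] by (simp add: A'_def L_def)
      have "\<eta> * mA \<le> (1/8) * L" using eta L mA0 by (intro mult_mono) auto
      then have "lam1 * measure N (B k) \<ge> L/2" using hW by linarith
      moreover have "lam1 * measure N (B k) \<le> lam1" using l1 by (simp add: mult_left_le)
      ultimately have lamL: "lam1 \<ge> L/2" by linarith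
      have Bsmall: "measure N (B i) \<le> \<delta>/2" if "i < k" for i
      proof -
        have "\<bar>measure M (A i) - lam1 * measure N (B i)\<bar> \<le> \<eta> * mA"
          using hb1[OF that that, of 0] mp_img_zero[OF X] mp_img_zero[OF Y] by simp
        moreover have "\<eta> * mA \<le> mA" using eta mA0 by (simp add: mult_left_le_one_le)
        ultimately have "lam1 * measure N (B i) \<le> 2 * mA" using Ale[OF that] by linarith
        then have "measure N (B i) \<le> 2 * mA / lam1" using l1 by (simp add: field_simps)
        also have "\<dots> \<le> 2 * mA / (L/2)" using lamL Lpos mA0 by (intro divide_left_mono) auto
        also have "\<dots> = 4 * mA / L" using Lpos by simp
        also have "\<dots> \<le> \<delta>/2" using L(2) Lpos d by (simp add: field_simps)
        finally show ?thesis .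
      qed
      define t where "t = min (\<delta>/2) (\<eta> * mA / lam1)"
      have t: "0 < t" using d eta mApos l1 by (simp add: t_def)
      obtain E where E: "E \<in> sets N" "0 < measure N E" "measure N E \<le> t"
        using ysmall[OF X Y inf Pr h1 t] by blast
      have Et: "measure N E \<le> \<delta>/2" "lam1 * measure N E \<le> \<eta> * mA"
        using E(3) l1 by (auto simp: t_def field_simps)
      define B' where "B' = (\<lambda>i. B i \<union> E)"
      have Bs: "B i \<in> sets N" if "i < k" for i using B that by (auto simp: fin_sets_def)
      have B'cond: "\<forall>i<k. B' i \<in> sets N \<and> 0 < emeasure N (B' i) \<and> emeasure N (B' i) \<le> ennreal \<delta>"
      proof (intro allI impI conjI)
        fix i assume i: "i < k"
        show Bi: "B' i \<in> sets N" using Bs[OF i] E by (simp add: B'_def)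
        have "measure N E \<le> measure N (B' i)" using Bi by (intro N.finite_measure_mono) (auto simp: B'_def)
        then show "0 < emeasure N (B' i)" using E(2) N.emeasure_eq_measure by simp
        have "measure N (B' i) \<le> measure N (B i) + measure N E"
          unfolding B'_def using Bs[OF i] E(1) by (rule measure_Un_le)
        then have "measure N (B' i) \<le> \<delta>" using Bsmall[OF i] Et by linarith
        then show "emeasure N (B' i) \<le> ennreal \<delta>" using N.emeasure_eq_measure by (simp add: ennreal_leI)
      qed
      obtain lam2 C where l2: "lam2 > 0" and C: "\<forall>i<k. C i \<in> fin_sets T"
        and hc: "\<forall>i<k. \<forall>j<k. \<forall>\<gamma>\<in>F. \<bar>measure N (B' i \<inter> b \<gamma> ` B' j) - lam2 * measure T (C i \<inter> c \<gamma> ` C j)\<bar> \<le> e2 * maxmeas N k B'"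
        using hd B'cond by blast
      have hb': "\<forall>i<k. \<forall>j<k. \<forall>\<gamma>\<in>insert 0 F. \<bar>measure M (A i \<inter> a \<gamma> ` A j) - lam1 * measure N (B' i \<inter> b \<gamma> ` B' j)\<bar> \<le> (3*\<eta>) * maxmeas M k A"
      proof (intro allI impI ballI)
        fix i j \<gamma> assume ij: "i < k" "j < k" and g: "\<gamma> \<in> insert 0 F"
        have u: "\<bar>measure N (B' i \<inter> b \<gamma> ` B' j) - measure N (B i \<inter> b \<gamma> ` B j)\<bar> \<le> 2 * measure N E"
          unfolding B'_def by (rule union_small[OF Y N.finite_measure_axioms Bs[OF ij(1)] Bs[OF ij(2)] E(1)])
        have "\<bar>lam1 * measure N (B' i \<inter> b \<gamma> ` B' j) - lam1 * measure N (B i \<inter> b \<gamma> ` B j)\<bar> \<le> lam1 * (2 * measure N E)"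
          using u l1 by (simp add: abs_mult right_diff_distrib[symmetric])
        then have "\<bar>lam1 * measure N (B' i \<inter> b \<gamma> ` B' j) - lam1 * measure N (B i \<inter> b \<gamma> ` B j)\<bar> \<le> 2 * (\<eta> * mA)"
          using Et(2) by linarith
        then have "\<bar>measure M (A i \<inter> a \<gamma> ` A j) - lam1 * measure N (B' i \<inter> b \<gamma> ` B' j)\<bar> \<le> (3*\<eta>) * mA"
          using hb1[OF ij g] by linarith
        then show "\<bar>measure M (A i \<inter> a \<gamma> ` A j) - lam1 * measure N (B' i \<inter> b \<gamma> ` B' j)\<bar> \<le> (3*\<eta>) * maxmeas M k A"
          using mA_def by simp
      qed
      have fin: "\<forall>i<k. \<forall>j<k. \<forall>\<gamma>\<in>F. \<bar>measure M (A i \<inter> a \<gamma> ` A j) - (lam1 * lam2) * measure T (C i \<inter> c \<gamma> ` C j)\<bar> \<le> (3*\<eta> + e2 * (1 + 3*\<eta>)) * maxmeas M k A"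
        by (rule chain[OF X Y k l1 l2 _ _ hb' hc]) (use eta e2 in auto)
      have "(3*\<eta> + e2 * (1 + 3*\<eta>)) \<le> \<epsilon>"
      proof -
        have "e2 * (1 + 3*\<eta>) \<le> e2 * (1 + 3/8)" using eta e2 by (intro mult_left_mono) auto
        moreover have "e2 * (1 + 3/8) = 11*\<epsilon>/32" unfolding e2_def by simp
        ultimately show ?thesis using eta by linarith
      qed
      then have "(3*\<eta> + e2 * (1 + 3*\<eta>)) * mA \<le> \<epsilon> * mA" using mA0 by (rule mult_right_mono)
      then have "\<forall>i<k. \<forall>j<k. \<forall>\<gamma>\<in>F. \<bar>measure M (A i \<inter> a \<gamma> ` A j) - (lam1 * lam2) * measure T (C i \<inter> c \<gamma> ` C j)\<bar> \<le> \<epsilon> * maxmeas M k A"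
        using fin mA_def by (meson order_trans)
      then show ?thesis using l1 l2 C by (intro exI[of _ "lam1*lam2"] exI[of _ C]) auto
    qed
  qed
qed


lemma mp_distr:
  assumes X: "mpa a M" shows "distr M M (a g) = M"
proof (rule measure_eqI)
  show "sets (distr M M (a g)) = sets M" by simp
  fix A assume "A \<in> sets (distr M M (a g))"
  then have A: "A \<in> sets M" by simp
  show "emeasure (distr M M (a g)) A = emeasure M A"
    using A X unfolding mpa_def by (subst emeasure_distr) auto
qed

lemma mpa_prod:
  fixes a1 :: "'g::{group_add,countable} \<Rightarrow> 'x1 \<Rightarrow> 'x1"
    and a2 :: "'g \<Rightarrow> 'x2 \<Rightarrow> 'x2"
  assumes X1: "mpa a1 M1" and X2: "mpa a2 M2"
  shows "mpa (diag_action a1 a2) (M1 \<Otimes>\<^sub>M M2)"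
proof -
  have sp: "space (M1 \<Otimes>\<^sub>M M2) = UNIV" using mpa_space[OF X1] mpa_space[OF X2] by (simp add: space_pair_measure)
  have sf1: "sigma_finite_measure M1" and sf2: "sigma_finite_measure M2"
    using X1 X2 unfolding mpa_def by auto
  interpret P: pair_sigma_finite M1 M2 using sf1 sf2 by (simp add: pair_sigma_finite_def)
  have sf: "sigma_finite_measure (M1 \<Otimes>\<^sub>M M2)" by (rule P.sigma_finite_measure_axioms)
  have z: "diag_action a1 a2 0 = id"
    using mpa_zero[OF X1] mpa_zero[OF X2] by (auto simp: diag_action_def)
  have c: "diag_action a1 a2 (g + h) = diag_action a1 a2 g \<circ> diag_action a1 a2 h" for g h
    using X1 X2 unfolding mpa_def by (auto simp: diag_action_def)
  have eq: "diag_action a1 a2 g = (\<lambda>(x, y). (a1 g x, a2 g y))" for g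
    by (simp add: diag_action_def)
  have m: "diag_action a1 a2 g \<in> M1 \<Otimes>\<^sub>M M2 \<rightarrow>\<^sub>M M1 \<Otimes>\<^sub>M M2" for g
  proof -
    have "(\<lambda>p. (a1 g (fst p), a2 g (snd p))) \<in> M1 \<Otimes>\<^sub>M M2 \<rightarrow>\<^sub>M M1 \<Otimes>\<^sub>M M2"
      by (intro measurable_Pair measurable_compose[OF measurable_fst] measurable_compose[OF measurable_snd] mpa_meas[OF X1] mpa_meas[OF X2])
    then show ?thesis by (simp add: eq case_prod_beta')
  qed
  have d: "distr (M1 \<Otimes>\<^sub>M M2) (M1 \<Otimes>\<^sub>M M2) (diag_action a1 a2 g) = M1 \<Otimes>\<^sub>M M2" for g
  proof -
    have "distr M1 M1 (a1 g) \<Otimes>\<^sub>M distr M2 M2 (a2 g) = distr (M1 \<Otimes>\<^sub>M M2) (M1 \<Otimes>\<^sub>M M2) (\<lambda>(x, y). (a1 g x, a2 g y))"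
      using mp_distr[OF X2, of g] sf2 by (intro pair_measure_distr mpa_meas[OF X1] mpa_meas[OF X2]) simp
    then show ?thesis using mp_distr[OF X1, of g] mp_distr[OF X2, of g] eq by simp
  qed
  have pres: "emeasure (M1 \<Otimes>\<^sub>M M2) (diag_action a1 a2 g -` A \<inter> space (M1 \<Otimes>\<^sub>M M2)) = emeasure (M1 \<Otimes>\<^sub>M M2) A"
    if "A \<in> sets (M1 \<Otimes>\<^sub>M M2)" for g A
  proof -
    have "emeasure (M1 \<Otimes>\<^sub>M M2) A = emeasure (distr (M1 \<Otimes>\<^sub>M M2) (M1 \<Otimes>\<^sub>M M2) (diag_action a1 a2 g)) A"
      by (simp add: d)
    also have "\<dots> = emeasure (M1 \<Otimes>\<^sub>M M2) (diag_action a1 a2 g -` A \<inter> space (M1 \<Otimes>\<^sub>M M2))"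
      using that m by (intro emeasure_distr) auto
    finally show ?thesis by simp
  qed
  show ?thesis unfolding mpa_def using sp sf z c m pres by blast
qed


definition part :: "'a measure \<Rightarrow> 'a set \<Rightarrow> 'a set set \<Rightarrow> bool" where
  "part M K PP \<longleftrightarrow> finite PP \<and> PP \<subseteq> sets M \<and> \<Union>PP = K \<and> (\<forall>P\<in>PP. \<forall>P'\<in>PP. P \<noteq> P' \<longrightarrow> P \<inter> P' = {})"

definition cellular :: "'a set set \<Rightarrow> 'b set set \<Rightarrow> ('a \<times> 'b) set \<Rightarrow> bool" where
  "cellular PP QQ U \<longleftrightarrow> (\<forall>x\<in>U. \<exists>P\<in>PP. \<exists>Q\<in>QQ. x \<in> P \<times> Q \<and> P \<times> Q \<subseteq> U)"

definition meet :: "'a set set \<Rightarrow> 'a set set \<Rightarrow> 'a set set" where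
  "meet PP PP' = (\<lambda>(P, P'). P \<inter> P') ` (PP \<times> PP')"

definition sd :: "'a set \<Rightarrow> 'a set \<Rightarrow> 'a set" where
  "sd A B = (A - B) \<union> (B - A)"

lemma part_eq: "part M K PP \<Longrightarrow> P \<in> PP \<Longrightarrow> P' \<in> PP \<Longrightarrow> x \<in> P \<Longrightarrow> x \<in> P' \<Longrightarrow> P = P'"
  unfolding part_def by blast

lemma part_sub: "part M K PP \<Longrightarrow> P \<in> PP \<Longrightarrow> P \<subseteq> K"
  unfolding part_def by auto

lemma part_cover: "part M K PP \<Longrightarrow> x \<in> K \<Longrightarrow> \<exists>P\<in>PP. x \<in> P"
  unfolding part_def by auto

lemma part_meet:
  assumes P: "part M K PP" and P': "part M K PP'" shows "part M K (meet PP PP')"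
proof -
  have f: "finite PP" "finite PP'" "PP \<subseteq> sets M" "PP' \<subseteq> sets M" "\<Union>PP = K" "\<Union>PP' = K"
    using P P' unfolding part_def by auto
  have d: "P1 \<inter> P2 = {}" if "P1 \<in> PP" "P2 \<in> PP" "P1 \<noteq> P2" for P1 P2
    using P that unfolding part_def by auto
  have d': "P1 \<inter> P2 = {}" if "P1 \<in> PP'" "P2 \<in> PP'" "P1 \<noteq> P2" for P1 P2
    using P' that unfolding part_def by auto
  have "finite (meet PP PP')" unfolding meet_def using f by auto
  moreover have "meet PP PP' \<subseteq> sets M" unfolding meet_def using f by auto
  moreover have "\<Union>(meet PP PP') = K"
  proof
    show "\<Union>(meet PP PP') \<subseteq> K" unfolding meet_def using f by auto
    show "K \<subseteq> \<Union>(meet PP PP')"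
    proof
      fix x assume "x \<in> K"
      then obtain A where "A \<in> PP" "x \<in> A" using part_cover[OF P] by blast
      moreover obtain B where "B \<in> PP'" "x \<in> B" using part_cover[OF P'] \<open>x \<in> K\<close> by blast
      ultimately show "x \<in> \<Union>(meet PP PP')" unfolding meet_def by auto
    qed
  qed
  moreover have "\<forall>X\<in>meet PP PP'. \<forall>Y\<in>meet PP PP'. X \<noteq> Y \<longrightarrow> X \<inter> Y = {}"
  proof (intro ballI impI)
    fix X Y assume X: "X \<in> meet PP PP'" and Y: "Y \<in> meet PP PP'" and XY: "X \<noteq> Y"
    obtain A B where AB: "A \<in> PP" "B \<in> PP'" "X = A \<inter> B" using X unfolding meet_def by auto
    obtain C D where CD: "C \<in> PP" "D \<in> PP'" "Y = C \<inter> D" using Y unfolding meet_def by auto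
    have "A \<noteq> C \<or> B \<noteq> D" using AB CD XY by auto
    then show "X \<inter> Y = {}"
    proof
      assume "A \<noteq> C" then have "A \<inter> C = {}" using d AB CD by auto
      then show ?thesis using AB CD by auto
    next
      assume "B \<noteq> D" then have "B \<inter> D = {}" using d' AB CD by auto
      then show ?thesis using AB CD by auto
    qed
  qed
  ultimately show ?thesis unfolding part_def by blast
qed

lemma meet_sub1: "P' \<in> meet PP PP' \<Longrightarrow> \<exists>P\<in>PP. P' \<subseteq> P"
  unfolding meet_def by auto

lemma meet_sub2: "P' \<in> meet PP PP' \<Longrightarrow> \<exists>P\<in>PP'. P' \<subseteq> P"
  unfolding meet_def by auto

lemma cellularD: "cellular PP QQ U \<Longrightarrow> x \<in> U \<Longrightarrow> \<exists>P\<in>PP. \<exists>Q\<in>QQ. x \<in> P \<times> Q \<and> P \<times> Q \<subseteq> U"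
  unfolding cellular_def by (rule bspec)

lemma cellular_sub:
  assumes "part M1 K1 PP" "part M2 K2 QQ" "cellular PP QQ U" shows "U \<subseteq> K1 \<times> K2"
proof
  fix x assume "x \<in> U"
  then obtain P Q where "P \<in> PP" "Q \<in> QQ" "x \<in> P \<times> Q" using cellularD[OF assms(3)] by meson
  then show "x \<in> K1 \<times> K2" using part_sub[OF assms(1)] part_sub[OF assms(2)] by (auto simp: mem_Times_iff)
qed

lemma cellular_refine:
  assumes P: "part M1 K1 PP" and P': "part M1 K1 PP'" and Q: "part M2 K2 QQ" and Q': "part M2 K2 QQ'"
    and sP: "\<forall>P'\<in>PP'. \<exists>P\<in>PP. P' \<subseteq> P" and sQ: "\<forall>Q'\<in>QQ'. \<exists>Q\<in>QQ. Q' \<subseteq> Q"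
    and U: "cellular PP QQ U"
  shows "cellular PP' QQ' U"
  unfolding cellular_def
proof
  fix x assume x: "x \<in> U"
  obtain P Q where PQ: "P \<in> PP" "Q \<in> QQ" "x \<in> P \<times> Q" "P \<times> Q \<subseteq> U" using cellularD[OF U x] by meson
  have x1: "fst x \<in> P" and x2: "snd x \<in> Q" using PQ(3) by (auto simp: mem_Times_iff)
  have "fst x \<in> K1" using part_sub[OF P PQ(1)] x1 by blast
  then obtain P' where P'm: "P' \<in> PP'" "fst x \<in> P'" using part_cover[OF P'] by blast
  obtain P1 where P1: "P1 \<in> PP" "P' \<subseteq> P1" using sP P'm by blast
  have "fst x \<in> P1" using P1 P'm by blast
  then have "P1 = P" using part_eq[OF P P1(1) PQ(1) _ x1] by blast
  have "snd x \<in> K2" using part_sub[OF Q PQ(2)] x2 by blast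
  then obtain Q' where Q'm: "Q' \<in> QQ'" "snd x \<in> Q'" using part_cover[OF Q'] by blast
  obtain Q1 where Q1: "Q1 \<in> QQ" "Q' \<subseteq> Q1" using sQ Q'm by blast
  have "snd x \<in> Q1" using Q1 Q'm by blast
  then have "Q1 = Q" using part_eq[OF Q Q1(1) PQ(2) _ x2] by blast
  have "P' \<times> Q' \<subseteq> P \<times> Q" using P1 Q1 \<open>P1 = P\<close> \<open>Q1 = Q\<close> by blast
  moreover have "x \<in> P' \<times> Q'" using P'm Q'm by (simp add: mem_Times_iff)
  ultimately show "\<exists>P\<in>PP'. \<exists>Q\<in>QQ'. x \<in> P \<times> Q \<and> P \<times> Q \<subseteq> U"
    using P'm(1) Q'm(1) PQ(4) by blast
qed

lemma cellular_Un: "cellular PP QQ U \<Longrightarrow> cellular PP QQ V \<Longrightarrow> cellular PP QQ (U \<union> V)"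
  unfolding cellular_def by (meson UnE le_supI1 le_supI2)

lemma cellular_compl:
  assumes P: "part M1 K1 PP" and Q: "part M2 K2 QQ" and U: "cellular PP QQ U"
  shows "cellular PP QQ (K1 \<times> K2 - U)"
  unfolding cellular_def
proof
  fix x assume x: "x \<in> K1 \<times> K2 - U"
  obtain P where P1: "P \<in> PP" "fst x \<in> P" using P x unfolding part_def by auto
  obtain Q where Q1: "Q \<in> QQ" "snd x \<in> Q" using Q x unfolding part_def by auto
  have "P \<times> Q \<subseteq> K1 \<times> K2 - U"
  proof
    fix z assume z: "z \<in> P \<times> Q"
    have "z \<in> K1 \<times> K2" using z P1 Q1 P Q unfolding part_def by auto
    moreover have "z \<notin> U"
    proof
      assume "z \<in> U"
      then obtain P' Q' where PQ': "P' \<in> PP" "Q' \<in> QQ" "z \<in> P' \<times> Q'" "P' \<times> Q' \<subseteq> U"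
        using cellularD[OF U] by meson
      have "P' = P" using part_eq[OF P PQ'(1) P1(1), of "fst z"] PQ' z by (auto simp: mem_Times_iff)
      have "Q' = Q" using part_eq[OF Q PQ'(2) Q1(1), of "snd z"] PQ' z by (auto simp: mem_Times_iff)
      have "x \<in> P \<times> Q" using P1 Q1 by (simp add: mem_Times_iff)
      then show False using PQ' \<open>P' = P\<close> \<open>Q' = Q\<close> x by blast
    qed
    ultimately show "z \<in> K1 \<times> K2 - U" by blast
  qed
  then show "\<exists>P\<in>PP. \<exists>Q\<in>QQ. x \<in> P \<times> Q \<and> P \<times> Q \<subseteq> K1 \<times> K2 - U"
    using P1 Q1 by (intro bexI[of _ P] bexI[of _ Q]) (auto simp: mem_Times_iff)
qed

lemma cellular_eq:
  assumes "cellular PP QQ U"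
  shows "U = (\<Union>(P, Q)\<in>{(P, Q) \<in> PP \<times> QQ. P \<times> Q \<subseteq> U}. P \<times> Q)"
proof
  show "U \<subseteq> (\<Union>(P, Q)\<in>{(P, Q) \<in> PP \<times> QQ. P \<times> Q \<subseteq> U}. P \<times> Q)"
  proof
    fix x assume "x \<in> U"
    then obtain P Q where "P \<in> PP" "Q \<in> QQ" "x \<in> P \<times> Q" "P \<times> Q \<subseteq> U" using cellularD[OF assms] by meson
    then show "x \<in> (\<Union>(P, Q)\<in>{(P, Q) \<in> PP \<times> QQ. P \<times> Q \<subseteq> U}. P \<times> Q)" by auto
  qed
qed auto

lemma cellular_sets:
  assumes P: "part M1 K1 PP" and Q: "part M2 K2 QQ" and U: "cellular PP QQ U"
  shows "U \<in> sets (M1 \<Otimes>\<^sub>M M2)"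
proof -
  have "finite (PP \<times> QQ)" using P Q unfolding part_def by auto
  then have fin: "finite {(P, Q) \<in> PP \<times> QQ. P \<times> Q \<subseteq> U}" by (rule rev_finite_subset) auto
  have "(\<Union>(P, Q)\<in>{(P, Q) \<in> PP \<times> QQ. P \<times> Q \<subseteq> U}. P \<times> Q) \<in> sets (M1 \<Otimes>\<^sub>M M2)"
    using P Q unfolding part_def by (intro sets.finite_UN fin) auto
  then show ?thesis using cellular_eq[OF U] by simp
qed


definition good :: "'a measure \<Rightarrow> 'b measure \<Rightarrow> 'a set \<Rightarrow> 'b set \<Rightarrow> ('a \<times> 'b) set \<Rightarrow> bool" where
  "good M1 M2 K1 K2 A \<longleftrightarrow> (\<forall>e>0. \<exists>PP QQ U. part M1 K1 PP \<and> part M2 K2 QQ \<and> cellular PP QQ U \<and>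
      measure (M1 \<Otimes>\<^sub>M M2) (sd (A \<inter> (K1 \<times> K2)) U) < e)"

lemma meas_le2:
  assumes "X \<subseteq> Y \<union> Z" "X \<in> sets M" "Y \<in> sets M" "Z \<in> sets M" "Y \<subseteq> K" "Z \<subseteq> K" "K \<in> fmeasurable M"
  shows "measure M X \<le> measure M Y + measure M Z"
proof -
  have "Y \<union> Z \<in> fmeasurable M" using assms by (intro fmeasurableI2[OF assms(7)]) auto
  then have "measure M X \<le> measure M (Y \<union> Z)" using assms by (intro measure_mono_fmeasurable) auto
  also have "\<dots> \<le> measure M Y + measure M Z" using assms by (intro measure_Un_le) auto
  finally show ?thesis .
qed

lemma sd_Un: "sd ((A \<union> B) \<inter> K) (U \<union> V) \<subseteq> sd (A \<inter> K) U \<union> sd (B \<inter> K) V"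
  unfolding sd_def by blast

lemma sd_sub: "U \<subseteq> K \<Longrightarrow> sd (A \<inter> K) U \<subseteq> K"
  unfolding sd_def by blast

lemma sd_sets: "A \<in> sets M \<Longrightarrow> B \<in> sets M \<Longrightarrow> sd A B \<in> sets M"
  unfolding sd_def by auto

context
  fixes M1 :: "'a measure" and M2 :: "'b measure" and K1 K2
  assumes K1: "K1 \<in> sets M1" and K2: "K2 \<in> sets M2"
    and Kf: "K1 \<times> K2 \<in> fmeasurable (M1 \<Otimes>\<^sub>M M2)"
    and s1: "space M1 = UNIV" and s2: "space M2 = UNIV"
begin

lemma good_Un:
  assumes A: "A \<in> sets (M1 \<Otimes>\<^sub>M M2)" and B: "B \<in> sets (M1 \<Otimes>\<^sub>M M2)"
    and gA: "good M1 M2 K1 K2 A" and gB: "good M1 M2 K1 K2 B"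
  shows "good M1 M2 K1 K2 (A \<union> B)"
  unfolding good_def
proof (intro allI impI)
  fix e :: real assume e: "0 < e"
  obtain PA QA UA where a: "part M1 K1 PA" "part M2 K2 QA" "cellular PA QA UA"
    "measure (M1 \<Otimes>\<^sub>M M2) (sd (A \<inter> (K1 \<times> K2)) UA) < e/2"
    using gA e unfolding good_def by (meson half_gt_zero)
  obtain PB QB UB where b: "part M1 K1 PB" "part M2 K2 QB" "cellular PB QB UB"
    "measure (M1 \<Otimes>\<^sub>M M2) (sd (B \<inter> (K1 \<times> K2)) UB) < e/2"
    using gB e unfolding good_def by (meson half_gt_zero)
  define PP where "PP = meet PA PB"
  define QQ where "QQ = meet QA QB"
  have P: "part M1 K1 PP" "part M2 K2 QQ" unfolding PP_def QQ_def using a b by (auto intro: part_meet)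
  have cA: "cellular PP QQ UA"
    by (rule cellular_refine[OF a(1) P(1) a(2) P(2) _ _ a(3)]) (auto simp: PP_def QQ_def dest: meet_sub1)
  have cB: "cellular PP QQ UB"
    by (rule cellular_refine[OF b(1) P(1) b(2) P(2) _ _ b(3)]) (auto simp: PP_def QQ_def dest: meet_sub2)
  have UAs: "UA \<in> sets (M1 \<Otimes>\<^sub>M M2)" "UA \<subseteq> K1 \<times> K2" using cellular_sets[OF a(1,2,3)] cellular_sub[OF a(1,2,3)] .
  have UBs: "UB \<in> sets (M1 \<Otimes>\<^sub>M M2)" "UB \<subseteq> K1 \<times> K2" using cellular_sets[OF b(1,2,3)] cellular_sub[OF b(1,2,3)] .
  have Ks: "K1 \<times> K2 \<in> sets (M1 \<Otimes>\<^sub>M M2)" using Kf by auto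
  have "measure (M1 \<Otimes>\<^sub>M M2) (sd ((A \<union> B) \<inter> (K1 \<times> K2)) (UA \<union> UB))
      \<le> measure (M1 \<Otimes>\<^sub>M M2) (sd (A \<inter> (K1 \<times> K2)) UA) + measure (M1 \<Otimes>\<^sub>M M2) (sd (B \<inter> (K1 \<times> K2)) UB)"
    by (rule meas_le2[OF sd_Un _ _ _ sd_sub[OF UAs(2)] sd_sub[OF UBs(2)] Kf])
      (use A B Ks UAs UBs in \<open>auto intro!: sd_sets\<close>)
  then show "\<exists>PP QQ U. part M1 K1 PP \<and> part M2 K2 QQ \<and> cellular PP QQ U \<and>
      measure (M1 \<Otimes>\<^sub>M M2) (sd ((A \<union> B) \<inter> (K1 \<times> K2)) U) < e"
    using P cellular_Un[OF cA cB] a(4) b(4) by (intro exI[of _ PP] exI[of _ QQ] exI[of _ "UA \<union> UB"] conjI) auto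
qed

lemma good_compl:
  assumes gA: "good M1 M2 K1 K2 A"
  shows "good M1 M2 K1 K2 (UNIV - A)"
  unfolding good_def
proof (intro allI impI)
  fix e :: real assume e: "0 < e"
  obtain PA QA UA where a: "part M1 K1 PA" "part M2 K2 QA" "cellular PA QA UA"
    "measure (M1 \<Otimes>\<^sub>M M2) (sd (A \<inter> (K1 \<times> K2)) UA) < e"
    using gA e unfolding good_def by meson
  have sub: "UA \<subseteq> K1 \<times> K2" by (rule cellular_sub[OF a(1,2,3)])
  have "sd ((UNIV - A) \<inter> (K1 \<times> K2)) (K1 \<times> K2 - UA) = sd (A \<inter> (K1 \<times> K2)) UA"
    using sub unfolding sd_def by auto
  then show "\<exists>PP QQ U. part M1 K1 PP \<and> part M2 K2 QQ \<and> cellular PP QQ U \<and>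
      measure (M1 \<Otimes>\<^sub>M M2) (sd ((UNIV - A) \<inter> (K1 \<times> K2)) U) < e"
    using a cellular_compl[OF a(1,2,3)] by (intro exI[of _ PA] exI[of _ QA] exI[of _ "K1 \<times> K2 - UA"]) auto
qed

lemma good_rect:
  assumes a: "a \<in> sets M1" and b: "b \<in> sets M2"
  shows "good M1 M2 K1 K2 (a \<times> b)"
  unfolding good_def
proof (intro allI impI)
  fix e :: real assume e: "0 < e"
  define PP where "PP = {K1 \<inter> a, K1 - a}"
  define QQ where "QQ = {K2 \<inter> b, K2 - b}"
  have P: "part M1 K1 PP" using K1 a unfolding part_def PP_def by auto
  have Q: "part M2 K2 QQ" using K2 b unfolding part_def QQ_def by auto
  have c: "cellular PP QQ ((K1 \<inter> a) \<times> (K2 \<inter> b))" unfolding cellular_def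
    by (intro ballI bexI[of _ "K1 \<inter> a"] bexI[of _ "K2 \<inter> b"] conjI) (auto simp: PP_def QQ_def)
  have "sd ((a \<times> b) \<inter> (K1 \<times> K2)) ((K1 \<inter> a) \<times> (K2 \<inter> b)) = {}" unfolding sd_def by auto
  then show "\<exists>PP QQ U. part M1 K1 PP \<and> part M2 K2 QQ \<and> cellular PP QQ U \<and>
      measure (M1 \<Otimes>\<^sub>M M2) (sd ((a \<times> b) \<inter> (K1 \<times> K2)) U) < e"
    using P Q c e by (intro exI[of _ PP] exI[of _ QQ] exI[of _ "(K1 \<inter> a) \<times> (K2 \<inter> b)"]) auto
qed

lemma good_empty: "good M1 M2 K1 K2 {}"
proof -
  have "good M1 M2 K1 K2 ({} \<times> {})" by (rule good_rect) auto
  then show ?thesis by simp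
qed

lemma good_finUN:
  fixes A :: "nat \<Rightarrow> ('a \<times> 'b) set" and N :: nat
  assumes A: "\<And>n. A n \<in> sets (M1 \<Otimes>\<^sub>M M2) \<and> good M1 M2 K1 K2 (A n)"
  shows "good M1 M2 K1 K2 (\<Union>n<N. A n) \<and> (\<Union>n<N. A n) \<in> sets (M1 \<Otimes>\<^sub>M M2)"
proof (induction N)
  case 0 then show ?case using good_empty by simp
next
  case (Suc N)
  have eq: "(\<Union>n<Suc N. A n) = A N \<union> (\<Union>n<N. A n)" by (auto simp: lessThan_Suc)
  show ?case unfolding eq using Suc A[of N] by (auto intro!: good_Un)
qed

lemma sd_mono_aux: "B \<subseteq> C \<Longrightarrow> sd C U \<subseteq> sd B U \<union> (C - B)"
  unfolding sd_def by blast

lemma good_UN: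
  fixes A :: "nat \<Rightarrow> ('a \<times> 'b) set"
  assumes A: "\<And>n. A n \<in> sets (M1 \<Otimes>\<^sub>M M2) \<and> good M1 M2 K1 K2 (A n)"
  shows "good M1 M2 K1 K2 (\<Union>n. A n)"
  unfolding good_def
proof (intro allI impI)
  fix e :: real assume e: "0 < e"
  define K where "K = K1 \<times> K2"
  have Ks: "K \<in> sets (M1 \<Otimes>\<^sub>M M2)" using Kf K_def by auto
  define B where "B = (\<lambda>N. (\<Union>n<N. A n) \<inter> K)"
  have Bs: "range B \<subseteq> sets (M1 \<Otimes>\<^sub>M M2)" using good_finUN[OF A] Ks by (auto simp: B_def)
  have Binc: "incseq B" unfolding B_def incseq_def by (auto, meson lessThan_iff order_less_le_trans)
  have UB: "(\<Union>N. B N) = (\<Union>n. A n) \<inter> K" unfolding B_def by auto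
  have UAs: "(\<Union>n. A n) \<inter> K \<in> sets (M1 \<Otimes>\<^sub>M M2)" using A Ks by auto
  have fin: "(\<Union>n. A n) \<inter> K \<in> fmeasurable (M1 \<Otimes>\<^sub>M M2)"
    using Kf UAs K_def by (intro fmeasurableI2[OF Kf]) auto
  have "(\<lambda>N. measure (M1 \<Otimes>\<^sub>M M2) (B N)) \<longlonglongrightarrow> measure (M1 \<Otimes>\<^sub>M M2) (\<Union>N. B N)"
    using fin UB by (intro Lim_measure_incseq Bs Binc) (auto simp: fmeasurable_def)
  then have "\<forall>\<^sub>F N in sequentially. measure (M1 \<Otimes>\<^sub>M M2) (B N) > measure (M1 \<Otimes>\<^sub>M M2) ((\<Union>n. A n) \<inter> K) - e/2"
    unfolding UB using e by (intro order_tendstoD(1)) auto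
  then obtain N where N: "measure (M1 \<Otimes>\<^sub>M M2) (B N) > measure (M1 \<Otimes>\<^sub>M M2) ((\<Union>n. A n) \<inter> K) - e/2"
    by (auto simp: eventually_sequentially)
  obtain PP QQ U where a: "part M1 K1 PP" "part M2 K2 QQ" "cellular PP QQ U"
    "measure (M1 \<Otimes>\<^sub>M M2) (sd ((\<Union>n<N. A n) \<inter> (K1 \<times> K2)) U) < e/2"
    using good_finUN[OF A, where N=N] e unfolding good_def by (meson half_gt_zero)
  have Us: "U \<in> sets (M1 \<Otimes>\<^sub>M M2)" "U \<subseteq> K" using cellular_sets[OF a(1,2,3)] cellular_sub[OF a(1,2,3)] K_def by auto
  have BN: "B N \<subseteq> (\<Union>n. A n) \<inter> K" "B N \<in> sets (M1 \<Otimes>\<^sub>M M2)" using Bs unfolding B_def by auto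
  have "measure (M1 \<Otimes>\<^sub>M M2) (sd ((\<Union>n. A n) \<inter> K) U) \<le> measure (M1 \<Otimes>\<^sub>M M2) (sd (B N) U) + measure (M1 \<Otimes>\<^sub>M M2) ((\<Union>n. A n) \<inter> K - B N)"
  proof (rule meas_le2[OF sd_mono_aux[OF BN(1)] _ _ _ _ _ Kf[folded K_def]])
    show "sd ((\<Union>n. A n) \<inter> K) U \<in> sets (M1 \<Otimes>\<^sub>M M2)" using UAs Us by (intro sd_sets)
    show "sd (B N) U \<in> sets (M1 \<Otimes>\<^sub>M M2)" using BN Us by (intro sd_sets)
    show "(\<Union>n. A n) \<inter> K - B N \<in> sets (M1 \<Otimes>\<^sub>M M2)" using UAs BN by auto
    show "sd (B N) U \<subseteq> K" using Us BN unfolding sd_def by blast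
    show "(\<Union>n. A n) \<inter> K - B N \<subseteq> K" by blast
  qed
  also have "measure (M1 \<Otimes>\<^sub>M M2) ((\<Union>n. A n) \<inter> K - B N) = measure (M1 \<Otimes>\<^sub>M M2) ((\<Union>n. A n) \<inter> K) - measure (M1 \<Otimes>\<^sub>M M2) (B N)"
    using fin BN UAs by (intro measure_Diff) (auto simp: fmeasurable_def)
  also have "sd (B N) U = sd ((\<Union>n<N. A n) \<inter> (K1 \<times> K2)) U" unfolding B_def K_def ..
  finally have "measure (M1 \<Otimes>\<^sub>M M2) (sd ((\<Union>n. A n) \<inter> K) U) < e" using a(4) N by linarith
  then show "\<exists>PP QQ U. part M1 K1 PP \<and> part M2 K2 QQ \<and> cellular PP QQ U \<and>
      measure (M1 \<Otimes>\<^sub>M M2) (sd ((\<Union>n. A n) \<inter> (K1 \<times> K2)) U) < e"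
    using a(1,2,3) K_def by blast
qed

lemma good_all:
  assumes "A \<in> sets (M1 \<Otimes>\<^sub>M M2)"
  shows "good M1 M2 K1 K2 A"
proof -
  have "A \<in> sigma_sets UNIV {a \<times> b | a b. a \<in> sets M1 \<and> b \<in> sets M2}"
    using assms s1 s2 by (simp add: sets_pair_measure)
  then show ?thesis
  proof (induction rule: sigma_sets.induct)
    case (Basic a)
    then obtain x y where "a = x \<times> y" "x \<in> sets M1" "y \<in> sets M2" by blast
    then show ?case using good_rect by simp
  next
    case Empty then show ?case by (rule good_empty)
  next
    case (Compl a) then show ?case using good_compl by simp
  next
    case (Union a)
    have "a i \<in> sets (M1 \<Otimes>\<^sub>M M2)" for i using Union(1)[of i] s1 s2 by (simp add: sets_pair_measure)
    then show ?case using Union(2) by (intro good_UN) auto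
  qed
qed

end


lemma approx_common:
  fixes M1 :: "'a measure" and M2 :: "'b measure" and A :: "nat \<Rightarrow> ('a \<times> 'b) set"
  assumes K1: "K1 \<in> sets M1" and K2: "K2 \<in> sets M2"
    and Kf: "K1 \<times> K2 \<in> fmeasurable (M1 \<Otimes>\<^sub>M M2)"
    and s1: "space M1 = UNIV" and s2: "space M2 = UNIV"
    and A: "\<forall>i<k. A i \<in> sets (M1 \<Otimes>\<^sub>M M2)" and e: "0 < e"
  shows "\<exists>PP QQ U. part M1 K1 PP \<and> part M2 K2 QQ \<and>
    (\<forall>i<k. cellular PP QQ (U i) \<and> measure (M1 \<Otimes>\<^sub>M M2) (sd (A i \<inter> (K1 \<times> K2)) (U i)) < e)"
  using A
proof (induction k)
  case 0
  have "part M1 K1 {K1}" "part M2 K2 {K2}" using K1 K2 unfolding part_def by auto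
  then show ?case by blast
next
  case (Suc k)
  then obtain PP QQ U where a: "part M1 K1 PP" "part M2 K2 QQ"
    "\<forall>i<k. cellular PP QQ (U i) \<and> measure (M1 \<Otimes>\<^sub>M M2) (sd (A i \<inter> (K1 \<times> K2)) (U i)) < e" by auto
  have "good M1 M2 K1 K2 (A k)" using good_all[OF K1 K2 Kf s1 s2] Suc.prems by auto
  then obtain PP' QQ' U' where b: "part M1 K1 PP'" "part M2 K2 QQ'" "cellular PP' QQ' U'"
    "measure (M1 \<Otimes>\<^sub>M M2) (sd (A k \<inter> (K1 \<times> K2)) U') < e"
    using e unfolding good_def by meson
  define P2 where "P2 = meet PP PP'"
  define Q2 where "Q2 = meet QQ QQ'"
  have P: "part M1 K1 P2" "part M2 K2 Q2" unfolding P2_def Q2_def using a b by (auto intro: part_meet)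
  have cA: "cellular P2 Q2 (U i)" if "i < k" for i
    by (rule cellular_refine[OF a(1) P(1) a(2) P(2) _ _]) (use a(3) that in \<open>auto simp: P2_def Q2_def dest: meet_sub1\<close>)
  have cB: "cellular P2 Q2 U'"
    by (rule cellular_refine[OF b(1) P(1) b(2) P(2) _ _ b(3)]) (auto simp: P2_def Q2_def dest: meet_sub2)
  define U2 where "U2 = U(k := U')"
  have "\<forall>i<Suc k. cellular P2 Q2 (U2 i) \<and> measure (M1 \<Otimes>\<^sub>M M2) (sd (A i \<inter> (K1 \<times> K2)) (U2 i)) < e"
  proof (intro allI impI)
    fix i assume "i < Suc k"
    then consider "i < k" | "i = k" by linarith
    then show "cellular P2 Q2 (U2 i) \<and> measure (M1 \<Otimes>\<^sub>M M2) (sd (A i \<inter> (K1 \<times> K2)) (U2 i)) < e"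
    proof cases
      case 1 then show ?thesis using cA a(3) by (simp add: U2_def)
    next
      case 2 then show ?thesis using cB b(4) by (simp add: U2_def)
    qed
  qed
  then show ?case using P by blast
qed

lemma sd_K: "sd A U \<subseteq> sd (A \<inter> K) U \<union> (A - K)"
  unfolding sd_def by blast

lemma approx_final:
  fixes a1 :: "'g::{group_add,countable} \<Rightarrow> 'x1 \<Rightarrow> 'x1" and a2 :: "'g \<Rightarrow> 'x2 \<Rightarrow> 'x2"
    and A :: "nat \<Rightarrow> ('x1 \<times> 'x2) set"
  assumes X1: "mpa a1 M1" and X2: "mpa a2 M2"
    and A: "\<forall>i<k. A i \<in> fin_sets (M1 \<Otimes>\<^sub>M M2)" and e: "0 < e"
  shows "\<exists>K1 K2 PP QQ U. K1 \<in> fin_sets M1 \<and> K2 \<in> fin_sets M2 \<and> part M1 K1 PP \<and> part M2 K2 QQ \<and>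
    (\<forall>i<k. cellular PP QQ (U i) \<and> measure (M1 \<Otimes>\<^sub>M M2) (sd (A i) (U i)) < e)"
proof -
  have s1: "space M1 = UNIV" and s2: "space M2 = UNIV" using X1 X2 by (auto simp: mpa_space)
  have sf1: "sigma_finite_measure M1" and sf2: "sigma_finite_measure M2" using X1 X2 unfolding mpa_def by auto
  interpret P: pair_sigma_finite M1 M2 using sf1 sf2 by (simp add: pair_sigma_finite_def)
  obtain C1 where C1: "range C1 \<subseteq> sets M1" "(\<Union>i. C1 i) = space M1" "\<And>i. emeasure M1 (C1 i) \<noteq> \<infinity>" "incseq C1"
    using P.M1.sigma_finite_incseq by blast
  obtain C2 where C2: "range C2 \<subseteq> sets M2" "(\<Union>i. C2 i) = space M2" "\<And>i. emeasure M2 (C2 i) \<noteq> \<infinity>" "incseq C2"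
    using P.M2.sigma_finite_incseq by blast
  define K where "K = (\<lambda>n. C1 n \<times> C2 n)"
  have Ks: "K n \<in> sets (M1 \<Otimes>\<^sub>M M2)" for n using C1 C2 by (auto simp: K_def)
  have Kinc: "incseq K" using C1(4) C2(4) unfolding K_def incseq_def by (auto simp: mono_def subset_eq)
  have KU: "(\<Union>n. K n) = UNIV"
  proof -
    have "(x, y) \<in> (\<Union>n. K n)" for x y
    proof -
      obtain n1 where "x \<in> C1 n1" using C1(2) s1 by auto
      moreover obtain n2 where "y \<in> C2 n2" using C2(2) s2 by auto
      ultimately have "x \<in> C1 (max n1 n2)" "y \<in> C2 (max n1 n2)"
        using C1(4) C2(4) unfolding incseq_def by (meson max.cobounded1 max.cobounded2 subsetD)+
      then show ?thesis unfolding K_def by blast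
    qed
    then show ?thesis by auto
  qed
  have Afm: "A i \<in> fmeasurable (M1 \<Otimes>\<^sub>M M2)" if "i < k" for i using A that fin_sets_eq by blast
  have lim: "(\<lambda>n. measure (M1 \<Otimes>\<^sub>M M2) (A i \<inter> K n)) \<longlonglongrightarrow> measure (M1 \<Otimes>\<^sub>M M2) (A i)" if "i < k" for i
  proof -
    have "(\<lambda>n. measure (M1 \<Otimes>\<^sub>M M2) (A i \<inter> K n)) \<longlonglongrightarrow> measure (M1 \<Otimes>\<^sub>M M2) (\<Union>n. A i \<inter> K n)"
    proof (rule Lim_measure_incseq)
      show "range (\<lambda>n. A i \<inter> K n) \<subseteq> sets (M1 \<Otimes>\<^sub>M M2)" using Afm[OF that] Ks by auto
      show "incseq (\<lambda>n. A i \<inter> K n)" using Kinc unfolding incseq_def by auto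
      have "(\<Union>n. A i \<inter> K n) = A i" using KU by auto
      then show "emeasure (M1 \<Otimes>\<^sub>M M2) (\<Union>n. A i \<inter> K n) \<noteq> \<infinity>" using Afm[OF that] by (simp add: fmeasurableD2)
    qed
    moreover have "(\<Union>n. A i \<inter> K n) = A i" using KU by auto
    ultimately show ?thesis by simp
  qed
  have "\<forall>\<^sub>F n in sequentially. \<forall>i\<in>{..<k}. measure (M1 \<Otimes>\<^sub>M M2) (A i \<inter> K n) > measure (M1 \<Otimes>\<^sub>M M2) (A i) - e/2"
  proof (rule eventually_ball_finite)
    show "\<forall>i\<in>{..<k}. \<forall>\<^sub>F n in sequentially. measure (M1 \<Otimes>\<^sub>M M2) (A i \<inter> K n) > measure (M1 \<Otimes>\<^sub>M M2) (A i) - e/2"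
    proof
      fix i assume "i \<in> {..<k}"
      then show "\<forall>\<^sub>F n in sequentially. measure (M1 \<Otimes>\<^sub>M M2) (A i \<inter> K n) > measure (M1 \<Otimes>\<^sub>M M2) (A i) - e/2"
        using lim e by (intro order_tendstoD(1)[OF lim]) auto
    qed
  qed simp
  then obtain n where n: "\<forall>i<k. measure (M1 \<Otimes>\<^sub>M M2) (A i \<inter> K n) > measure (M1 \<Otimes>\<^sub>M M2) (A i) - e/2"
    by (auto simp: eventually_sequentially)
  define K1 where "K1 = C1 n"
  define K2 where "K2 = C2 n"
  have K1: "K1 \<in> sets M1" "K1 \<in> fin_sets M1" using C1 unfolding K1_def fin_sets_def by (auto simp: less_top)
  have K2: "K2 \<in> sets M2" "K2 \<in> fin_sets M2" using C2 unfolding K2_def fin_sets_def by (auto simp: less_top)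
  have Kf: "K1 \<times> K2 \<in> fmeasurable (M1 \<Otimes>\<^sub>M M2)"
    using K1 K2 C1(3) C2(3) unfolding K1_def K2_def
    by (intro fmeasurableI) (auto simp: P.M2.emeasure_pair_measure_Times ennreal_mult_less_top less_top)
  have As: "\<forall>i<k. A i \<in> sets (M1 \<Otimes>\<^sub>M M2)" using Afm by auto
  obtain PP QQ U where a: "part M1 K1 PP" "part M2 K2 QQ"
    "\<forall>i<k. cellular PP QQ (U i) \<and> measure (M1 \<Otimes>\<^sub>M M2) (sd (A i \<inter> (K1 \<times> K2)) (U i)) < e/2"
    using approx_common[OF K1(1) K2(1) Kf s1 s2 As, of "e/2"] e by auto
  have "measure (M1 \<Otimes>\<^sub>M M2) (sd (A i) (U i)) < e" if i: "i < k" for i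
  proof -
    have Us: "U i \<in> sets (M1 \<Otimes>\<^sub>M M2)" "U i \<subseteq> K1 \<times> K2"
      using a(3) i cellular_sets[OF a(1,2)] cellular_sub[OF a(1,2)] by auto
    have Ks': "K1 \<times> K2 \<in> sets (M1 \<Otimes>\<^sub>M M2)" using Kf by auto
    have big: "A i \<union> K1 \<times> K2 \<in> fmeasurable (M1 \<Otimes>\<^sub>M M2)" using Afm[OF i] Kf by auto
    have "measure (M1 \<Otimes>\<^sub>M M2) (sd (A i) (U i)) \<le> measure (M1 \<Otimes>\<^sub>M M2) (sd (A i \<inter> (K1 \<times> K2)) (U i)) + measure (M1 \<Otimes>\<^sub>M M2) (A i - K1 \<times> K2)"
    proof (rule meas_le2[OF sd_K _ _ _ _ _ big])
      show "sd (A i) (U i) \<in> sets (M1 \<Otimes>\<^sub>M M2)" using Afm[OF i] Us by (intro sd_sets) auto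
      show "sd (A i \<inter> K1 \<times> K2) (U i) \<in> sets (M1 \<Otimes>\<^sub>M M2)" using Afm[OF i] Us Ks' by (intro sd_sets) auto
      show "A i - K1 \<times> K2 \<in> sets (M1 \<Otimes>\<^sub>M M2)" using Afm[OF i] Ks' by auto
      show "sd (A i \<inter> K1 \<times> K2) (U i) \<subseteq> A i \<union> K1 \<times> K2" using Us unfolding sd_def by blast
      show "A i - K1 \<times> K2 \<subseteq> A i \<union> K1 \<times> K2" by blast
    qed
    also have "measure (M1 \<Otimes>\<^sub>M M2) (A i - K1 \<times> K2) = measure (M1 \<Otimes>\<^sub>M M2) (A i) - measure (M1 \<Otimes>\<^sub>M M2) (A i \<inter> K n)"
    proof -
      have "A i - K1 \<times> K2 = A i - (A i \<inter> K n)" unfolding K_def K1_def K2_def by blast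
      moreover have "measure (M1 \<Otimes>\<^sub>M M2) (A i - (A i \<inter> K n)) = measure (M1 \<Otimes>\<^sub>M M2) (A i) - measure (M1 \<Otimes>\<^sub>M M2) (A i \<inter> K n)"
        using Afm[OF i] Ks[of n] by (intro measure_Diff) (auto simp: fmeasurable_def)
      ultimately show ?thesis by simp
    qed
    finally show ?thesis using a(3) i n by fastforce
  qed
  then show ?thesis using K1 K2 a by blast
qed


lemma meas_le3:
  assumes "X \<subseteq> Y \<union> Z \<union> W" "X \<in> sets M" "Y \<in> fmeasurable M" "Z \<in> fmeasurable M" "W \<in> fmeasurable M"
  shows "measure M X \<le> measure M Y + measure M Z + measure M W"
proof -
  have f: "Y \<union> Z \<union> W \<in> fmeasurable M" using assms by auto
  have "measure M X \<le> measure M (Y \<union> Z \<union> W)" using assms f by (intro measure_mono_fmeasurable) auto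
  also have "\<dots> \<le> measure M (Y \<union> Z) + measure M W" using assms by (intro measure_Un_le) auto
  also have "measure M (Y \<union> Z) \<le> measure M Y + measure M Z" using assms by (intro measure_Un_le) auto
  finally show ?thesis by simp
qed

lemma int_pert_one:
  assumes X: "mpa a M" and A: "A \<in> fmeasurable M" "A' \<in> fmeasurable M" and U: "U \<in> fmeasurable M" "U' \<in> fmeasurable M"
  shows "measure M (A \<inter> a g ` A') \<le> measure M (U \<inter> a g ` U') + measure M (sd A U) + measure M (sd A' U')"
proof -
  have inj: "inj (a g)" by (rule mpa_inj[OF X])
  have sub: "A \<inter> a g ` A' \<subseteq> (U \<inter> a g ` U') \<union> sd A U \<union> a g ` sd A' U'"
    using inj unfolding sd_def by (auto simp: inj_eq)
  have s1: "U \<inter> a g ` U' \<in> fmeasurable M"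
    using U mpa_img_sets[OF X] by (intro fmeasurableI2[OF U(1)]) auto
  have s2: "sd A U \<in> fmeasurable M" using A U unfolding sd_def by auto
  have s3': "sd A' U' \<in> fmeasurable M" using A U unfolding sd_def by auto
  have s3: "a g ` sd A' U' \<in> fmeasurable M" using mpa_img_fin[OF X] s3' fin_sets_eq by blast
  have s0: "A \<inter> a g ` A' \<in> sets M" using A mpa_img_sets[OF X] by auto
  have "measure M (A \<inter> a g ` A') \<le> measure M (U \<inter> a g ` U') + measure M (sd A U) + measure M (a g ` sd A' U')"
    by (rule meas_le3[OF sub s0 s1 s2 s3])
  also have "measure M (a g ` sd A' U') = measure M (sd A' U')" using mpa_img_measure[OF X] s3' by auto
  finally show ?thesis .
qed

lemma sd_sym: "sd A B = sd B A" unfolding sd_def by blast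

lemma int_pert:
  assumes X: "mpa a M" and A: "A \<in> fmeasurable M" "A' \<in> fmeasurable M" and U: "U \<in> fmeasurable M" "U' \<in> fmeasurable M"
  shows "\<bar>measure M (A \<inter> a g ` A') - measure M (U \<inter> a g ` U')\<bar> \<le> measure M (sd A U) + measure M (sd A' U')"
proof -
  have "sd U A = sd A U" "sd U' A' = sd A' U'" by (rule sd_sym)+
  then show ?thesis using int_pert_one[OF X A U, of g] int_pert_one[OF X U A, of g] by (simp add: abs_le_iff)
qed


lemma disjointify:
  fixes b :: "'g::{group_add,countable} \<Rightarrow> 'y \<Rightarrow> 'y" and P' :: "nat \<Rightarrow> 'y set" and n :: nat
  assumes Y: "mpa b N" and Pp: "\<forall>p<n. P' p \<in> fin_sets N" and l: "lam > 0" and c: "c \<ge> 0"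
    and hov: "\<forall>p<n. \<forall>r<n. p \<noteq> r \<longrightarrow> lam * measure N (P' p \<inter> P' r) \<le> c"
  shows "\<exists>D. (\<forall>p<n. D p \<in> fin_sets N) \<and> (\<forall>p<n. \<forall>r<n. p \<noteq> r \<longrightarrow> D p \<inter> D r = {}) \<and>
    (\<forall>p<n. \<forall>p'<n. \<forall>g. lam * \<bar>measure N (P' p \<inter> b g ` P' p') - measure N (D p \<inter> b g ` D p')\<bar> \<le> 2 * real n * c)"
proof -
  define D where "D = (\<lambda>p. P' p - (\<Union>r\<in>{..<p}. P' r))"
  have Pf: "P' p \<in> fmeasurable N" if "p < n" for p using Pp that fin_sets_eq by blast
  have Ds: "D p \<in> sets N" if "p < n" for p
  proof -
    have "(\<Union>r\<in>{..<p}. P' r) \<in> sets N" using Pf that by (intro sets.finite_UN) auto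
    then show ?thesis using Pf[OF that] unfolding D_def by auto
  qed
  have Dsub: "D p \<subseteq> P' p" for p unfolding D_def by blast
  have Df: "D p \<in> fmeasurable N" if "p < n" for p by (rule fmeasurableI2[OF Pf[OF that] Dsub Ds[OF that]])
  have Dd: "D p \<inter> D r = {}" if "p \<noteq> r" for p r
  proof (cases "p < r")
    case True then have "D r \<inter> P' p = {}" unfolding D_def by auto
    then show ?thesis using Dsub[of p] by blast
  next
    case False then have "r < p" using that by simp
    then have "D p \<inter> P' r = {}" unfolding D_def by auto
    then show ?thesis using Dsub[of r] by blast
  qed
  have Dm: "lam * measure N (P' p - D p) \<le> real n * c" if "p < n" for p
  proof -
    have eq: "P' p - D p = (\<Union>r\<in>{..<p}. P' p \<inter> P' r)" unfolding D_def by auto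
    have "measure N (P' p - D p) \<le> (\<Sum>r\<in>{..<p}. measure N (P' p \<inter> P' r))"
      unfolding eq using Pf that by (intro measure_UNION_le) auto
    then have "lam * measure N (P' p - D p) \<le> lam * (\<Sum>r\<in>{..<p}. measure N (P' p \<inter> P' r))"
      using l by simp
    also have "\<dots> = (\<Sum>r\<in>{..<p}. lam * measure N (P' p \<inter> P' r))" by (simp add: sum_distrib_left)
    also have "\<dots> \<le> (\<Sum>r\<in>{..<p}. c)" using hov that by (intro sum_mono) auto
    also have "\<dots> = real p * c" by simp
    also have "\<dots> \<le> real n * c" using that c by (intro mult_right_mono) auto
    finally show ?thesis .
  qed
  have main: "lam * \<bar>measure N (P' p \<inter> b g ` P' p') - measure N (D p \<inter> b g ` D p')\<bar> \<le> 2 * real n * c"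
    if pp: "p < n" "p' < n" for p p' g
  proof -
    have inj: "inj (b g)" by (rule mpa_inj[OF Y])
    have s0: "P' p \<inter> b g ` P' p' \<in> sets N" using Pf pp mpa_img_sets[OF Y] by auto
    have s1: "D p \<inter> b g ` D p' \<in> fmeasurable N"
      using Df pp mpa_img_sets[OF Y] by (intro fmeasurableI2[OF Df[OF pp(1)]]) auto
    have s2: "P' p - D p \<in> fmeasurable N" using Pf[OF pp(1)] Ds[OF pp(1)] by (intro fmeasurableI2[OF Pf[OF pp(1)]]) auto
    have s3': "P' p' - D p' \<in> fmeasurable N" using Pf[OF pp(2)] Ds[OF pp(2)] by (intro fmeasurableI2[OF Pf[OF pp(2)]]) auto
    have s3: "b g ` (P' p' - D p') \<in> fmeasurable N" using mpa_img_fin[OF Y] s3' fin_sets_eq by blast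
    have sub1: "D p \<inter> b g ` D p' \<subseteq> P' p \<inter> b g ` P' p'" using Dsub by blast
    have sub2: "P' p \<inter> b g ` P' p' \<subseteq> (D p \<inter> b g ` D p') \<union> (P' p - D p) \<union> b g ` (P' p' - D p')"
      by blast
    have "measure N (D p \<inter> b g ` D p') \<le> measure N (P' p \<inter> b g ` P' p')"
      using s1 s0 Pf[OF pp(1)] by (intro measure_mono_fmeasurable[OF sub1]) (auto intro: fmeasurableI2[OF Pf[OF pp(1)]])
    moreover have "measure N (P' p \<inter> b g ` P' p') \<le> measure N (D p \<inter> b g ` D p') + measure N (P' p - D p) + measure N (b g ` (P' p' - D p'))"
      by (rule meas_le3[OF sub2 s0 s1 s2 s3])
    moreover have "measure N (b g ` (P' p' - D p')) = measure N (P' p' - D p')" using mpa_img_measure[OF Y] s3' by auto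
    ultimately have "\<bar>measure N (P' p \<inter> b g ` P' p') - measure N (D p \<inter> b g ` D p')\<bar> \<le> measure N (P' p - D p) + measure N (P' p' - D p')"
      by linarith
    then have "lam * \<bar>measure N (P' p \<inter> b g ` P' p') - measure N (D p \<inter> b g ` D p')\<bar> \<le> lam * measure N (P' p - D p) + lam * measure N (P' p' - D p')"
      using l by (simp add: distrib_left[symmetric])
    also have "\<dots> \<le> real n * c + real n * c" using Dm pp by (intro add_mono) auto
    finally show ?thesis by (simp add: algebra_simps)
  qed
  show ?thesis using Df Dd main by (intro exI[of _ D]) (auto simp: fin_sets_eq)
qed



lemma side:
  fixes a :: "'g::{group_add,countable} \<Rightarrow> 'x \<Rightarrow> 'x" and b :: "'g \<Rightarrow> 'y \<Rightarrow> 'y"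
  assumes X: "mpa a M" and Y: "mpa b N" and h: "proj_contained a M b N"
    and PP: "part M K PP" and K: "K \<in> fin_sets M" and F: "finite F" and r: "\<rho> > 0"
  shows "\<exists>(n::nat) P lam D. bij_betw P {..<n} PP \<and> lam > 0 \<and> (\<forall>p<n. P p \<in> fin_sets M) \<and>
    (\<forall>p<n. \<forall>r<n. p \<noteq> r \<longrightarrow> P p \<inter> P r = {}) \<and> (\<forall>p<n. D p \<in> fin_sets N) \<and>
    (\<forall>p<n. \<forall>r<n. p \<noteq> r \<longrightarrow> D p \<inter> D r = {}) \<and>
    (\<forall>p<n. \<forall>p'<n. \<forall>\<gamma>\<in>F. \<bar>measure M (P p \<inter> a \<gamma> ` P p') - lam * measure N (D p \<inter> b \<gamma> ` D p')\<bar> \<le> \<rho>)"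
proof -
  define n where "n = card PP"
  have finPP: "finite PP" using PP unfolding part_def by auto
  obtain P where bij: "bij_betw P {..<n} PP"
    using ex_bij_betw_nat_finite[OF finPP] unfolding n_def atLeast0LessThan by blast
  have Pin: "P p \<in> PP" if "p < n" for p using bij that by (auto dest: bij_betwE)
  have Kf: "K \<in> fmeasurable M" using K fin_sets_eq by blast
  have Pf: "P p \<in> fin_sets M" if "p < n" for p
  proof -
    have "P p \<in> sets M" using Pin[OF that] PP unfolding part_def by auto
    moreover have "P p \<subseteq> K" using part_sub[OF PP Pin[OF that]] .
    ultimately show ?thesis using fmeasurableI2[OF Kf] fin_sets_eq by blast
  qed
  have Pd: "P p \<inter> P r = {}" if "p < n" "r < n" "p \<noteq> r" for p r
  proof -
    have "P p \<noteq> P r" using bij that unfolding bij_betw_def inj_on_def by auto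
    then show ?thesis using PP Pin that unfolding part_def by auto
  qed
  define mP where "mP = \<bar>maxmeas M n P\<bar>"
  have mP0: "0 \<le> mP" by (simp add: mP_def)
  define \<epsilon>1 where "\<epsilon>1 = \<rho> / ((1 + 2 * real n) * (mP + 1))"
  have e1: "0 < \<epsilon>1" using r mP0 by (simp add: \<epsilon>1_def)
  obtain lam P' where l: "lam > 0" and P': "\<forall>i<n. P' i \<in> fin_sets N"
    and hb: "\<forall>i<n. \<forall>j<n. \<forall>\<gamma>\<in>insert 0 F. \<bar>measure M (P i \<inter> a \<gamma> ` P j) - lam * measure N (P' i \<inter> b \<gamma> ` P' j)\<bar> \<le> \<epsilon>1 * maxmeas M n P"
    using h[unfolded proj_contained_def, rule_format, of "insert 0 F" n P \<epsilon>1] F Pf e1 by auto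
  define c where "c = \<epsilon>1 * mP"
  have c0: "0 \<le> c" using e1 mP0 by (simp add: c_def)
  have hb': "\<bar>measure M (P i \<inter> a \<gamma> ` P j) - lam * measure N (P' i \<inter> b \<gamma> ` P' j)\<bar> \<le> c"
    if "i < n" "j < n" "\<gamma> \<in> insert 0 F" for i j \<gamma>
  proof -
    have "\<epsilon>1 * maxmeas M n P \<le> \<epsilon>1 * mP" using e1 unfolding mP_def by (intro mult_left_mono) auto
    then show ?thesis using hb that unfolding c_def by fastforce
  qed
  have ov: "\<forall>p<n. \<forall>r<n. p \<noteq> r \<longrightarrow> lam * measure N (P' p \<inter> P' r) \<le> c"
  proof (intro allI impI)
    fix p r assume pr: "p < n" "r < n" "p \<noteq> r"
    have "\<bar>measure M (P p \<inter> a 0 ` P r) - lam * measure N (P' p \<inter> b 0 ` P' r)\<bar> \<le> c"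
      using hb'[OF pr(1,2)] by simp
    then show "lam * measure N (P' p \<inter> P' r) \<le> c"
      using Pd[OF pr] mpa_img_zero[OF X] mpa_img_zero[OF Y] by simp
  qed
  obtain D where D: "\<forall>p<n. D p \<in> fin_sets N" "\<forall>p<n. \<forall>r<n. p \<noteq> r \<longrightarrow> D p \<inter> D r = {}"
    "\<forall>p<n. \<forall>p'<n. \<forall>g. lam * \<bar>measure N (P' p \<inter> b g ` P' p') - measure N (D p \<inter> b g ` D p')\<bar> \<le> 2 * real n * c"
    using disjointify[OF Y P' l c0 ov] by blast
  have fin: "\<bar>measure M (P p \<inter> a \<gamma> ` P p') - lam * measure N (D p \<inter> b \<gamma> ` D p')\<bar> \<le> \<rho>"
    if "p < n" "p' < n" "\<gamma> \<in> F" for p p' \<gamma>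
  proof -
    have 1: "\<bar>measure M (P p \<inter> a \<gamma> ` P p') - lam * measure N (P' p \<inter> b \<gamma> ` P' p')\<bar> \<le> c"
      using hb' that by auto
    have "\<bar>lam * measure N (P' p \<inter> b \<gamma> ` P' p') - lam * measure N (D p \<inter> b \<gamma> ` D p')\<bar>
        = lam * \<bar>measure N (P' p \<inter> b \<gamma> ` P' p') - measure N (D p \<inter> b \<gamma> ` D p')\<bar>"
      using l by (simp add: abs_mult right_diff_distrib[symmetric])
    also have "\<dots> \<le> 2 * real n * c" using D(3) that by blast
    finally have 2: "\<bar>lam * measure N (P' p \<inter> b \<gamma> ` P' p') - lam * measure N (D p \<inter> b \<gamma> ` D p')\<bar> \<le> 2 * real n * c" .
    have "(1 + 2 * real n) * c = \<rho> * (mP / (mP + 1))"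
    proof -
      have a: "1 + 2 * real n \<noteq> 0" by (simp add: add_pos_nonneg)
      have e: "\<rho> / ((1 + 2 * real n) * (mP + 1)) = (\<rho> / (mP + 1)) / (1 + 2 * real n)"
        by (simp add: divide_divide_eq_left mult.commute)
      show ?thesis unfolding c_def \<epsilon>1_def e using a by simp
    qed
    also have "\<dots> \<le> \<rho> * 1" using r mP0 by (intro mult_left_mono) auto
    finally have 3: "(1 + 2 * real n) * c \<le> \<rho>" by simp
    show ?thesis using 1 2 3 by (simp add: algebra_simps)
  qed
  have th: "bij_betw P {..<n} PP \<and> lam > 0 \<and> (\<forall>p<n. P p \<in> fin_sets M) \<and>
    (\<forall>p<n. \<forall>r<n. p \<noteq> r \<longrightarrow> P p \<inter> P r = {}) \<and> (\<forall>p<n. D p \<in> fin_sets N) \<and>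
    (\<forall>p<n. \<forall>r<n. p \<noteq> r \<longrightarrow> D p \<inter> D r = {}) \<and>
    (\<forall>p<n. \<forall>p'<n. \<forall>\<gamma>\<in>F. \<bar>measure M (P p \<inter> a \<gamma> ` P p') - lam * measure N (D p \<inter> b \<gamma> ` D p')\<bar> \<le> \<rho>)"
    using bij l Pf Pd D(1,2) fin by auto
  show ?thesis by (intro exI[where x=n] exI[where x=P] exI[where x=lam] exI[where x=D]) (rule th)
qed


lemma diag_img_Times: "diag_action a1 a2 g ` (A \<times> B) = a1 g ` A \<times> a2 g ` B"
proof
  show "diag_action a1 a2 g ` (A \<times> B) \<subseteq> a1 g ` A \<times> a2 g ` B" by (auto simp: diag_action_def)
  show "a1 g ` A \<times> a2 g ` B \<subseteq> diag_action a1 a2 g ` (A \<times> B)"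
  proof
    fix z assume "z \<in> a1 g ` A \<times> a2 g ` B"
    then obtain x y where "x \<in> A" "y \<in> B" "z = (a1 g x, a2 g y)" by blast
    then show "z \<in> diag_action a1 a2 g ` (A \<times> B)" unfolding diag_action_def
      by (intro image_eqI[of _ _ "(x, y)"]) auto
  qed
qed

lemma rect_measure:
  assumes "sigma_finite_measure M2" "X \<in> sets M1" "Y \<in> sets M2"
  shows "measure (M1 \<Otimes>\<^sub>M M2) (X \<times> Y) = measure M1 X * measure M2 Y"
proof -
  interpret sigma_finite_measure M2 by fact
  show ?thesis using assms(2,3) by (simp add: measure_def emeasure_pair_measure_Times enn2real_mult)
qed

lemma cell_measure:
  fixes a1 :: "'g::{group_add,countable} \<Rightarrow> 'x1 \<Rightarrow> 'x1" and a2 :: "'g \<Rightarrow> 'x2 \<Rightarrow> 'x2"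
    and P :: "nat \<Rightarrow> 'x1 set" and Q :: "nat \<Rightarrow> 'x2 set"
  assumes X1: "mpa a1 M1" and X2: "mpa a2 M2"
    and P: "\<forall>p<n1. P p \<in> fin_sets M1" and Pd: "\<forall>p<n1. \<forall>r<n1. p \<noteq> r \<longrightarrow> P p \<inter> P r = {}"
    and Q: "\<forall>q<n2. Q q \<in> fin_sets M2" and Qd: "\<forall>q<n2. \<forall>r<n2. q \<noteq> r \<longrightarrow> Q q \<inter> Q r = {}"
    and S: "S \<subseteq> {..<n1} \<times> {..<n2}" and S': "S' \<subseteq> {..<n1} \<times> {..<n2}"
  shows "measure (M1 \<Otimes>\<^sub>M M2) ((\<Union>(p, q)\<in>S. P p \<times> Q q) \<inter> diag_action a1 a2 g ` (\<Union>(p, q)\<in>S'. P p \<times> Q q))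
    = (\<Sum>s\<in>S. \<Sum>t\<in>S'. measure M1 (P (fst s) \<inter> a1 g ` P (fst t)) * measure M2 (Q (snd s) \<inter> a2 g ` Q (snd t)))"
proof -
  have sf2: "sigma_finite_measure M2" using X2 unfolding mpa_def by auto
  have finS: "finite S" "finite S'" using S S' by (auto intro: finite_subset)
  define R where "R = (\<lambda>((p, q), (p', q')). (P p \<inter> a1 g ` P p') \<times> (Q q \<inter> a2 g ` Q q'))"
  have img: "diag_action a1 a2 g ` (\<Union>(p, q)\<in>S'. P p \<times> Q q) = (\<Union>(p, q)\<in>S'. a1 g ` P p \<times> a2 g ` Q q)"
    by (simp add: image_UN diag_img_Times case_prod_beta')
  have eq: "(\<Union>(p, q)\<in>S. P p \<times> Q q) \<inter> diag_action a1 a2 g ` (\<Union>(p, q)\<in>S'. P p \<times> Q q) = (\<Union>x\<in>S \<times> S'. R x)"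
    unfolding img R_def by auto
  have Rs: "R x \<in> sets (M1 \<Otimes>\<^sub>M M2)" if x: "x \<in> S \<times> S'" for x
  proof -
    obtain p q p' q' where xe: "x = ((p, q), (p', q'))" by (metis prod.collapse)
    have ix: "p < n1" "q < n2" "p' < n1" "q' < n2" using x S S' xe by auto
    have "P p \<inter> a1 g ` P p' \<in> sets M1" using P ix mpa_img_sets[OF X1] unfolding fin_sets_def by auto
    moreover have "Q q \<inter> a2 g ` Q q' \<in> sets M2" using Q ix mpa_img_sets[OF X2] unfolding fin_sets_def by auto
    ultimately show ?thesis unfolding R_def xe by auto
  qed
  have dj: "disjoint_family_on R (S \<times> S')"
    unfolding disjoint_family_on_def
  proof (intro ballI impI)
    fix x y assume x: "x \<in> S \<times> S'" and y: "y \<in> S \<times> S'" and xy: "x \<noteq> y"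
    obtain p q p' q' where xe: "x = ((p, q), (p', q'))" by (metis prod.collapse)
    obtain r s r' s' where ye: "y = ((r, s), (r', s'))" by (metis prod.collapse)
    have ix: "p < n1" "q < n2" "p' < n1" "q' < n2" using x S S' xe by auto
    have iy: "r < n1" "s < n2" "r' < n1" "s' < n2" using y S S' ye by auto
    have "p \<noteq> r \<or> q \<noteq> s \<or> p' \<noteq> r' \<or> q' \<noteq> s'" using xy xe ye by auto
    moreover have "P p \<inter> P r = {}" if "p \<noteq> r" using Pd ix iy that by auto
    moreover have "Q q \<inter> Q s = {}" if "q \<noteq> s" using Qd ix iy that by auto
    moreover have "a1 g ` P p' \<inter> a1 g ` P r' = {}" if "p' \<noteq> r'"
      using Pd ix iy that mpa_inj[OF X1] by (simp add: image_Int[symmetric])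
    moreover have "a2 g ` Q q' \<inter> a2 g ` Q s' = {}" if "q' \<noteq> s'"
      using Qd ix iy that mpa_inj[OF X2] by (simp add: image_Int[symmetric])
    ultimately show "R x \<inter> R y = {}" unfolding R_def xe ye by auto
  qed
  have fin: "emeasure (M1 \<Otimes>\<^sub>M M2) (R x) \<noteq> \<infinity>" if "x \<in> S \<times> S'" for x
  proof -
    obtain p q p' q' where xe: "x = ((p, q), (p', q'))" by (metis prod.collapse)
    have ix: "p < n1" "q < n2" using that S xe by auto
    have sub: "R x \<subseteq> P p \<times> Q q" unfolding R_def xe by auto
    have fm: "P p \<times> Q q \<in> fmeasurable (M1 \<Otimes>\<^sub>M M2)"
    proof -
      interpret sigma_finite_measure M2 by (rule sf2)
      show ?thesis using P Q ix unfolding fin_sets_def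
        by (intro fmeasurableI) (auto simp: emeasure_pair_measure_Times ennreal_mult_less_top)
    qed
    show ?thesis using fmeasurableD2[OF fmeasurableI2[OF fm sub Rs[OF that]]] by simp
  qed
  have "measure (M1 \<Otimes>\<^sub>M M2) (\<Union>x\<in>S \<times> S'. R x) = (\<Sum>x\<in>S \<times> S'. measure (M1 \<Otimes>\<^sub>M M2) (R x))"
    using finS Rs dj fin by (intro measure_finite_Union) auto
  also have "\<dots> = (\<Sum>x\<in>S \<times> S'. (case x of ((p, q), (p', q')) \<Rightarrow> measure M1 (P p \<inter> a1 g ` P p') * measure M2 (Q q \<inter> a2 g ` Q q')))"
  proof (rule sum.cong[OF refl])
    fix x assume x: "x \<in> S \<times> S'"
    obtain p q p' q' where xe: "x = ((p, q), (p', q'))" by (metis prod.collapse)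
    have ix: "p < n1" "q < n2" "p' < n1" "q' < n2" using x S S' xe by auto
    have "P p \<inter> a1 g ` P p' \<in> sets M1" using P ix mpa_img_sets[OF X1] unfolding fin_sets_def by auto
    moreover have "Q q \<inter> a2 g ` Q q' \<in> sets M2" using Q ix mpa_img_sets[OF X2] unfolding fin_sets_def by auto
    ultimately show "measure (M1 \<Otimes>\<^sub>M M2) (R x) = (case x of ((p, q), (p', q')) \<Rightarrow> measure M1 (P p \<inter> a1 g ` P p') * measure M2 (Q q \<inter> a2 g ` Q q'))"
      unfolding R_def xe by (simp add: rect_measure[OF sf2])
  qed
  also have "\<dots> = (\<Sum>s\<in>S. \<Sum>t\<in>S'. measure M1 (P (fst s) \<inter> a1 g ` P (fst t)) * measure M2 (Q (snd s) \<inter> a2 g ` Q (snd t)))"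
    by (subst sum.cartesian_product[symmetric]) (simp add: case_prod_beta')
  finally show ?thesis unfolding eq .
qed


lemma term_err:
  fixes x y X Y r mP mQ :: real
  assumes "\<bar>x - X\<bar> \<le> r" "\<bar>y - Y\<bar> \<le> r" "0 \<le> y" "y \<le> mQ" "0 \<le> x" "x \<le> mP" "r \<le> 1"
  shows "\<bar>x * y - X * Y\<bar> \<le> r * (mQ + mP + 1)"
proof -
  have r0: "0 \<le> r" using assms(1) by linarith
  have eq: "x * y - X * Y = (x - X) * y + X * (y - Y)" by (simp add: algebra_simps)
  have "\<bar>(x - X) * y\<bar> \<le> r * mQ"
    unfolding abs_mult using assms r0 by (intro mult_mono) auto
  moreover have "\<bar>X\<bar> \<le> mP + 1" using assms by linarith
  then have "\<bar>X * (y - Y)\<bar> \<le> (mP + 1) * r"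
    unfolding abs_mult using assms r0 by (intro mult_mono) auto
  ultimately have "\<bar>x * y - X * Y\<bar> \<le> r * mQ + (mP + 1) * r" unfolding eq by linarith
  then show ?thesis by (simp add: algebra_simps)
qed

lemma dsum_err:
  fixes f g :: "'a \<Rightarrow> 'b \<Rightarrow> real"
  assumes "finite I" "finite J" "\<And>s t. s \<in> I \<Longrightarrow> t \<in> J \<Longrightarrow> \<bar>f s t - g s t\<bar> \<le> B"
  shows "\<bar>(\<Sum>s\<in>I. \<Sum>t\<in>J. f s t) - (\<Sum>s\<in>I. \<Sum>t\<in>J. g s t)\<bar> \<le> real (card I) * real (card J) * B"
proof -
  have "\<bar>(\<Sum>s\<in>I. \<Sum>t\<in>J. f s t) - (\<Sum>s\<in>I. \<Sum>t\<in>J. g s t)\<bar> = \<bar>\<Sum>s\<in>I. \<Sum>t\<in>J. (f s t - g s t)\<bar>"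
    by (simp add: sum_subtractf)
  also have "\<dots> \<le> (\<Sum>s\<in>I. \<bar>\<Sum>t\<in>J. (f s t - g s t)\<bar>)" by (rule sum_abs)
  also have "\<dots> \<le> (\<Sum>s\<in>I. \<Sum>t\<in>J. \<bar>f s t - g s t\<bar>)" by (intro sum_mono sum_abs)
  also have "\<dots> \<le> (\<Sum>s\<in>I. \<Sum>t\<in>J. B)" using assms(3) by (intro sum_mono) auto
  also have "\<dots> = real (card I) * real (card J) * B" by simp
  finally show ?thesis .
qed


lemma part5:
  fixes a1 :: "'g::{group_add,countable} \<Rightarrow> 'x1 \<Rightarrow> 'x1" and a2 :: "'g \<Rightarrow> 'x2 \<Rightarrow> 'x2"
    and b1 :: "'g \<Rightarrow> 'y1 \<Rightarrow> 'y1" and b2 :: "'g \<Rightarrow> 'y2 \<Rightarrow> 'y2"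
  assumes X1: "mpa a1 M1" and X2: "mpa a2 M2" and Y1: "mpa b1 N1" and Y2: "mpa b2 N2"
    and h1: "proj_contained a1 M1 b1 N1" and h2: "proj_contained a2 M2 b2 N2"
  shows "proj_contained (diag_action a1 a2) (M1 \<Otimes>\<^sub>M M2) (diag_action b1 b2) (N1 \<Otimes>\<^sub>M N2)"
  unfolding proj_contained_def
proof (intro allI impI)
  fix F :: "'g set" and k :: nat and A :: "nat \<Rightarrow> ('x1 \<times> 'x2) set" and \<epsilon> :: real
  assume F: "finite F" and A: "\<forall>i<k. A i \<in> fin_sets (M1 \<Otimes>\<^sub>M M2)" and e: "0 < \<epsilon>"
  have XM: "mpa (diag_action a1 a2) (M1 \<Otimes>\<^sub>M M2)" by (rule mpa_prod[OF X1 X2])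
  have YN: "mpa (diag_action b1 b2) (N1 \<Otimes>\<^sub>M N2)" by (rule mpa_prod[OF Y1 Y2])
  have sfN2: "sigma_finite_measure N2" using Y2 unfolding mpa_def by auto
  show "\<exists>lam B. 0 < lam \<and> (\<forall>i<k. B i \<in> fin_sets (N1 \<Otimes>\<^sub>M N2)) \<and> (\<forall>i<k. \<forall>j<k. \<forall>\<gamma>\<in>F.
          \<bar>measure (M1 \<Otimes>\<^sub>M M2) (A i \<inter> diag_action a1 a2 \<gamma> ` A j) - lam * measure (N1 \<Otimes>\<^sub>M N2) (B i \<inter> diag_action b1 b2 \<gamma> ` B j)\<bar>
            \<le> \<epsilon> * maxmeas (M1 \<Otimes>\<^sub>M M2) k A)"
  proof (cases "k = 0")
    case True then show ?thesis by (intro exI[of _ 1]) auto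
  next
    case False
    then have k: "0 < k" by simp
    define mA where "mA = maxmeas (M1 \<Otimes>\<^sub>M M2) k A"
    have mA0: "0 \<le> mA" using maxmeas_nonneg[OF k] mA_def by simp
    have Ale: "measure (M1 \<Otimes>\<^sub>M M2) (A i) \<le> mA" if "i < k" for i using maxmeas_ge[OF that] mA_def by simp
    have Afm: "A i \<in> fmeasurable (M1 \<Otimes>\<^sub>M M2)" if "i < k" for i using A that fin_sets_eq by blast
    have Aint: "measure (M1 \<Otimes>\<^sub>M M2) (A i \<inter> diag_action a1 a2 \<gamma> ` A j) \<le> measure (M1 \<Otimes>\<^sub>M M2) (A i)" if "i < k" "j < k" for i j \<gamma>
      using Afm that mpa_img_sets[OF XM] by (intro measure_mono_fmeasurable) auto
    show ?thesis
    proof (cases "mA = 0")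
      case True
      have "\<forall>i<k. \<forall>j<k. \<forall>\<gamma>\<in>F. \<bar>measure (M1 \<Otimes>\<^sub>M M2) (A i \<inter> diag_action a1 a2 \<gamma> ` A j) - 1 * measure (N1 \<Otimes>\<^sub>M N2) ({} \<inter> diag_action b1 b2 \<gamma> ` {})\<bar> \<le> \<epsilon> * maxmeas (M1 \<Otimes>\<^sub>M M2) k A"
      proof (intro allI impI ballI)
        fix i j \<gamma> assume ij: "i < k" "j < k"
        have "measure (M1 \<Otimes>\<^sub>M M2) (A i \<inter> diag_action a1 a2 \<gamma> ` A j) \<le> 0" using Aint[OF ij, of \<gamma>] Ale[OF ij(1)] True by linarith
        then show "\<bar>measure (M1 \<Otimes>\<^sub>M M2) (A i \<inter> diag_action a1 a2 \<gamma> ` A j) - 1 * measure (N1 \<Otimes>\<^sub>M N2) ({} \<inter> diag_action b1 b2 \<gamma> ` {})\<bar> \<le> \<epsilon> * maxmeas (M1 \<Otimes>\<^sub>M M2) k A"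
          using True mA_def by simp
      qed
      then show ?thesis by (intro exI[of _ 1] exI[of _ "\<lambda>_. {}"]) (auto simp: fin_sets_def)
    next
      case False
      then have mApos: "0 < mA" using mA0 by simp
      define \<eta> where "\<eta> = \<epsilon> / 3"
      have eta: "0 < \<eta> * mA" using e mApos by (simp add: \<eta>_def)
      obtain K1 K2 PP QQ U where ap: "K1 \<in> fin_sets M1" "K2 \<in> fin_sets M2" "part M1 K1 PP" "part M2 K2 QQ"
        "\<forall>i<k. cellular PP QQ (U i) \<and> measure (M1 \<Otimes>\<^sub>M M2) (sd (A i) (U i)) < \<eta> * mA"
        using approx_final[OF X1 X2 A eta] by blast
      define mP where "mP = measure M1 K1"
      define mQ where "mQ = measure M2 K2"
      have mP0: "0 \<le> mP" and mQ0: "0 \<le> mQ" by (simp_all add: mP_def mQ_def)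
      define C where "C = real ((card PP * card QQ) ^ 2)"
      have C0: "0 \<le> C" by (simp add: C_def)
      define \<rho> where "\<rho> = min 1 (\<eta> * mA / ((C + 1) * (mQ + mP + 1)))"
      have rho: "0 < \<rho>" "\<rho> \<le> 1" using eta C0 mP0 mQ0 by (auto simp: \<rho>_def)
      have rhoC: "C * (\<rho> * (mQ + mP + 1)) \<le> \<eta> * mA"
      proof -
        have pos: "0 < (C + 1) * (mQ + mP + 1)" using C0 mP0 mQ0 by simp
        have "\<rho> \<le> \<eta> * mA / ((C + 1) * (mQ + mP + 1))" by (simp add: \<rho>_def)
        then have "\<rho> * ((C + 1) * (mQ + mP + 1)) \<le> \<eta> * mA" using pos by (simp add: pos_le_divide_eq)
        moreover have "C * (\<rho> * (mQ + mP + 1)) \<le> (C + 1) * (\<rho> * (mQ + mP + 1))"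
          using rho mP0 mQ0 C0 by (intro mult_right_mono) auto
        moreover have "(C + 1) * (\<rho> * (mQ + mP + 1)) = \<rho> * ((C + 1) * (mQ + mP + 1))" by (simp only: ac_simps)
        ultimately show ?thesis by linarith
      qed
      obtain n1 :: nat and P lam1 D1 where s1: "bij_betw P {..<n1} PP" "lam1 > 0" "\<forall>p<n1. P p \<in> fin_sets M1"
        "\<forall>p<n1. \<forall>r<n1. p \<noteq> r \<longrightarrow> P p \<inter> P r = {}" "\<forall>p<n1. D1 p \<in> fin_sets N1"
        "\<forall>p<n1. \<forall>r<n1. p \<noteq> r \<longrightarrow> D1 p \<inter> D1 r = {}"
        "\<forall>p<n1. \<forall>p'<n1. \<forall>\<gamma>\<in>F. \<bar>measure M1 (P p \<inter> a1 \<gamma> ` P p') - lam1 * measure N1 (D1 p \<inter> b1 \<gamma> ` D1 p')\<bar> \<le> \<rho>"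
        using side[OF X1 Y1 h1 ap(3) ap(1) F rho(1)] by (elim exE conjE) (rule that, assumption+)
      obtain n2 :: nat and Q lam2 D2 where s2: "bij_betw Q {..<n2} QQ" "lam2 > 0" "\<forall>q<n2. Q q \<in> fin_sets M2"
        "\<forall>q<n2. \<forall>r<n2. q \<noteq> r \<longrightarrow> Q q \<inter> Q r = {}" "\<forall>q<n2. D2 q \<in> fin_sets N2"
        "\<forall>q<n2. \<forall>r<n2. q \<noteq> r \<longrightarrow> D2 q \<inter> D2 r = {}"
        "\<forall>q<n2. \<forall>q'<n2. \<forall>\<gamma>\<in>F. \<bar>measure M2 (Q q \<inter> a2 \<gamma> ` Q q') - lam2 * measure N2 (D2 q \<inter> b2 \<gamma> ` D2 q')\<bar> \<le> \<rho>"
        using side[OF X2 Y2 h2 ap(4) ap(2) F rho(1)] by (elim exE conjE) (rule that, assumption+)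
      have n1: "n1 = card PP" using bij_betw_same_card[OF s1(1)] by simp
      have n2: "n2 = card QQ" using bij_betw_same_card[OF s2(1)] by simp
      have Pcov: "\<exists>p<n1. P0 = P p" if "P0 \<in> PP" for P0
      proof -
        have "P0 \<in> P ` {..<n1}" using bij_betw_imp_surj_on[OF s1(1)] that by simp
        then show ?thesis by auto
      qed
      have Qcov: "\<exists>q<n2. Q0 = Q q" if "Q0 \<in> QQ" for Q0
      proof -
        have "Q0 \<in> Q ` {..<n2}" using bij_betw_imp_surj_on[OF s2(1)] that by simp
        then show ?thesis by auto
      qed
      define S where "S = (\<lambda>i. {s \<in> {..<n1} \<times> {..<n2}. P (fst s) \<times> Q (snd s) \<subseteq> U i})"
      have Ssub: "S i \<subseteq> {..<n1} \<times> {..<n2}" for i unfolding S_def by auto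
      have finS: "finite (S i)" for i using Ssub[of i] by (rule finite_subset) auto
      have cardS: "card (S i) \<le> n1 * n2" for i using card_mono[OF _ Ssub[of i]] by simp
      have Ueq: "U i = (\<Union>(p, q)\<in>S i. P p \<times> Q q)" if i: "i < k" for i
      proof
        show "(\<Union>(p, q)\<in>S i. P p \<times> Q q) \<subseteq> U i" unfolding S_def by auto
        show "U i \<subseteq> (\<Union>(p, q)\<in>S i. P p \<times> Q q)"
        proof
          fix x assume x: "x \<in> U i"
          obtain P0 Q0 where PQ: "P0 \<in> PP" "Q0 \<in> QQ" "x \<in> P0 \<times> Q0" "P0 \<times> Q0 \<subseteq> U i"
            using cellularD[OF _ x] ap(5) i by meson
          obtain p where p: "p < n1" "P0 = P p" using Pcov[OF PQ(1)] by blast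
          obtain q where q: "q < n2" "Q0 = Q q" using Qcov[OF PQ(2)] by blast
          have "(p, q) \<in> S i" unfolding S_def using p q PQ by auto
          then show "x \<in> (\<Union>(p, q)\<in>S i. P p \<times> Q q)" using PQ p q by auto
        qed
      qed
      define V where "V = (\<lambda>i. \<Union>(p, q)\<in>S i. D1 p \<times> D2 q)"
      have Vfin: "V i \<in> fin_sets (N1 \<Otimes>\<^sub>M N2)" for i
      proof -
        define R1 where "R1 = (\<Union>p\<in>{..<n1}. D1 p)"
        define R2 where "R2 = (\<Union>q\<in>{..<n2}. D2 q)"
        have R1: "R1 \<in> fmeasurable N1" unfolding R1_def using s1(5) fin_sets_eq by (intro fmeasurable.finite_UN) auto
        have R2: "R2 \<in> fmeasurable N2" unfolding R2_def using s2(5) fin_sets_eq by (intro fmeasurable.finite_UN) auto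
        have RR: "R1 \<times> R2 \<in> fmeasurable (N1 \<Otimes>\<^sub>M N2)"
        proof -
          interpret sigma_finite_measure N2 by (rule sfN2)
          show ?thesis using R1 R2 by (intro fmeasurableI) (auto simp: emeasure_pair_measure_Times ennreal_mult_less_top fmeasurable_def)
        qed
        have sub: "V i \<subseteq> R1 \<times> R2" unfolding V_def R1_def R2_def using Ssub[of i] by auto
        have "V i \<in> sets (N1 \<Otimes>\<^sub>M N2)" unfolding V_def using finS s1(5) s2(5) Ssub[of i]
          by (intro sets.finite_UN) (auto simp: fin_sets_def)
        then show ?thesis using fmeasurableI2[OF RR sub] fin_sets_eq by blast
      qed
      have sfM2: "sigma_finite_measure M2" using X2 unfolding mpa_def by auto
      have Kfm: "K1 \<times> K2 \<in> fmeasurable (M1 \<Otimes>\<^sub>M M2)"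
      proof -
        interpret sigma_finite_measure M2 by (rule sfM2)
        show ?thesis using ap(1,2) by (intro fmeasurableI) (auto simp: emeasure_pair_measure_Times ennreal_mult_less_top fin_sets_def)
      qed
      have Ufm: "U i \<in> fmeasurable (M1 \<Otimes>\<^sub>M M2)" if "i < k" for i
      proof -
        have c: "cellular PP QQ (U i)" using ap(5) that by blast
        show ?thesis using fmeasurableI2[OF Kfm cellular_sub[OF ap(3,4) c] cellular_sets[OF ap(3,4) c]] .
      qed
      have Psub: "P p \<subseteq> K1" if "p < n1" for p
        using part_sub[OF ap(3)] bij_betwE[OF s1(1)] that by blast
      have Qsub: "Q q \<subseteq> K2" if "q < n2" for q
        using part_sub[OF ap(4)] bij_betwE[OF s2(1)] that by blast
      have K1fm: "K1 \<in> fmeasurable M1" using ap(1) fin_sets_eq by blast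
      have K2fm: "K2 \<in> fmeasurable M2" using ap(2) fin_sets_eq by blast
      have xle: "measure M1 (P p \<inter> a1 \<gamma> ` P p') \<le> mP" if "p < n1" "p' < n1" for p p' \<gamma>
      proof -
        have Ps: "P p \<in> sets M1" "P p' \<in> sets M1" using s1(3) that by (auto simp: fin_sets_def)
        have "measure M1 (P p \<inter> a1 \<gamma> ` P p') \<le> measure M1 K1"
          using Psub[OF that(1)] Ps mpa_img_sets[OF X1] K1fm by (intro measure_mono_fmeasurable) auto
        then show ?thesis by (simp add: mP_def)
      qed
      have yle: "measure M2 (Q q \<inter> a2 \<gamma> ` Q q') \<le> mQ" if "q < n2" "q' < n2" for q q' \<gamma>
      proof -
        have Qs: "Q q \<in> sets M2" "Q q' \<in> sets M2" using s2(3) that by (auto simp: fin_sets_def)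
        have "measure M2 (Q q \<inter> a2 \<gamma> ` Q q') \<le> measure M2 K2"
          using Qsub[OF that(1)] Qs mpa_img_sets[OF X2] K2fm by (intro measure_mono_fmeasurable) auto
        then show ?thesis by (simp add: mQ_def)
      qed
      have cardSS: "real (card (S i)) * real (card (S j)) \<le> C" for i j
      proof -
        have "card (S i) * card (S j) \<le> (n1 * n2) * (n1 * n2)" using cardS[of i] cardS[of j] by (rule mult_le_mono)
        then have "real (card (S i) * card (S j)) \<le> real ((n1 * n2) ^ 2)" unfolding power2_eq_square by (rule of_nat_mono)
        then show ?thesis unfolding C_def n1 n2 by (simp only: of_nat_mult)
      qed
      have main: "\<bar>measure (M1 \<Otimes>\<^sub>M M2) (A i \<inter> diag_action a1 a2 \<gamma> ` A j) - (lam1 * lam2) * measure (N1 \<Otimes>\<^sub>M N2) (V i \<inter> diag_action b1 b2 \<gamma> ` V j)\<bar> \<le> \<epsilon> * mA"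
        if ij: "i < k" "j < k" and g: "\<gamma> \<in> F" for i j \<gamma>
      proof -
        define x :: "nat \<times> nat \<Rightarrow> nat \<times> nat \<Rightarrow> real" where "x = (\<lambda>s t. measure M1 (P (fst s) \<inter> a1 \<gamma> ` P (fst t)))"
        define y :: "nat \<times> nat \<Rightarrow> nat \<times> nat \<Rightarrow> real" where "y = (\<lambda>s t. measure M2 (Q (snd s) \<inter> a2 \<gamma> ` Q (snd t)))"
        define x' :: "nat \<times> nat \<Rightarrow> nat \<times> nat \<Rightarrow> real" where "x' = (\<lambda>s t. lam1 * measure N1 (D1 (fst s) \<inter> b1 \<gamma> ` D1 (fst t)))"
        define y' :: "nat \<times> nat \<Rightarrow> nat \<times> nat \<Rightarrow> real" where "y' = (\<lambda>s t. lam2 * measure N2 (D2 (snd s) \<inter> b2 \<gamma> ` D2 (snd t)))"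
        have eqU: "measure (M1 \<Otimes>\<^sub>M M2) (U i \<inter> diag_action a1 a2 \<gamma> ` U j) = (\<Sum>s\<in>S i. \<Sum>t\<in>S j. x s t * y s t)"
          unfolding Ueq[OF ij(1)] Ueq[OF ij(2)] x_def y_def
          by (rule cell_measure[OF X1 X2 s1(3) s1(4) s2(3) s2(4) Ssub Ssub])
        have eqV: "(lam1 * lam2) * measure (N1 \<Otimes>\<^sub>M N2) (V i \<inter> diag_action b1 b2 \<gamma> ` V j) = (\<Sum>s\<in>S i. \<Sum>t\<in>S j. x' s t * y' s t)"
        proof -
          have "measure (N1 \<Otimes>\<^sub>M N2) (V i \<inter> diag_action b1 b2 \<gamma> ` V j) = (\<Sum>s\<in>S i. \<Sum>t\<in>S j. measure N1 (D1 (fst s) \<inter> b1 \<gamma> ` D1 (fst t)) * measure N2 (D2 (snd s) \<inter> b2 \<gamma> ` D2 (snd t)))"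
            unfolding V_def by (rule cell_measure[OF Y1 Y2 s1(5) s1(6) s2(5) s2(6) Ssub Ssub])
          then show ?thesis unfolding x'_def y'_def by (simp add: sum_distrib_left algebra_simps)
        qed
        have tm: "\<bar>x s t * y s t - x' s t * y' s t\<bar> \<le> \<rho> * (mQ + mP + 1)" if st0: "s \<in> S i" "t \<in> S j" for s t
        proof (rule term_err)
          have st: "fst s < n1" "snd s < n2" "fst t < n1" "snd t < n2" using st0 Ssub[of i] Ssub[of j] by auto
          show "\<bar>x s t - x' s t\<bar> \<le> \<rho>" using s1(7) st g unfolding x_def x'_def by blast
          show "\<bar>y s t - y' s t\<bar> \<le> \<rho>" using s2(7) st g unfolding y_def y'_def by blast
          show "0 \<le> y s t" by (simp add: y_def)
          show "y s t \<le> mQ" unfolding y_def using yle st by blast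
          show "0 \<le> x s t" by (simp add: x_def)
          show "x s t \<le> mP" unfolding x_def using xle st by blast
          show "\<rho> \<le> 1" by (rule rho(2))
        qed
        have B0: "0 \<le> \<rho> * (mQ + mP + 1)" using rho mP0 mQ0 by simp
        have "\<bar>(\<Sum>s\<in>S i. \<Sum>t\<in>S j. x s t * y s t) - (\<Sum>s\<in>S i. \<Sum>t\<in>S j. x' s t * y' s t)\<bar> \<le> real (card (S i)) * real (card (S j)) * (\<rho> * (mQ + mP + 1))"
          by (rule dsum_err[OF finS finS tm])
        also have "\<dots> \<le> C * (\<rho> * (mQ + mP + 1))" using cardSS B0 by (rule mult_right_mono)
        also have "\<dots> \<le> \<eta> * mA" by (rule rhoC)
        finally have 1: "\<bar>measure (M1 \<Otimes>\<^sub>M M2) (U i \<inter> diag_action a1 a2 \<gamma> ` U j) - (lam1 * lam2) * measure (N1 \<Otimes>\<^sub>M N2) (V i \<inter> diag_action b1 b2 \<gamma> ` V j)\<bar> \<le> \<eta> * mA"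
          unfolding eqU eqV .
        have 2: "\<bar>measure (M1 \<Otimes>\<^sub>M M2) (A i \<inter> diag_action a1 a2 \<gamma> ` A j) - measure (M1 \<Otimes>\<^sub>M M2) (U i \<inter> diag_action a1 a2 \<gamma> ` U j)\<bar>
            \<le> measure (M1 \<Otimes>\<^sub>M M2) (sd (A i) (U i)) + measure (M1 \<Otimes>\<^sub>M M2) (sd (A j) (U j))"
          by (rule int_pert[OF XM Afm[OF ij(1)] Afm[OF ij(2)] Ufm[OF ij(1)] Ufm[OF ij(2)]])
        have 3: "measure (M1 \<Otimes>\<^sub>M M2) (sd (A i) (U i)) < \<eta> * mA" "measure (M1 \<Otimes>\<^sub>M M2) (sd (A j) (U j)) < \<eta> * mA"
          using ap(5) ij by auto
        have "\<epsilon> * mA = 3 * (\<eta> * mA)" by (simp add: \<eta>_def)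
        then show ?thesis using 1 2 3 by linarith
      qed
      show ?thesis using main s1(2) s2(2) Vfin mA_def by (intro exI[of _ "lam1 * lam2"] exI[of _ V]) auto
    qed
  qed
qed


theorem lemma2p4:
  fixes a :: "'g::{group_add,countable} \<Rightarrow> 'x::polish_space \<Rightarrow> 'x" and M :: "'x measure"
    and b :: "'g \<Rightarrow> 'y::polish_space \<Rightarrow> 'y" and N :: "'y measure"
    and c :: "'g \<Rightarrow> 'z::polish_space \<Rightarrow> 'z" and T :: "'z measure"
    and a1 :: "'g \<Rightarrow> 'x1::polish_space \<Rightarrow> 'x1" and M1 :: "'x1 measure"
    and a2 :: "'g \<Rightarrow> 'x2::polish_space \<Rightarrow> 'x2" and M2 :: "'x2 measure"
    and b1 :: "'g \<Rightarrow> 'y1::polish_space \<Rightarrow> 'y1" and N1 :: "'y1 measure"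
    and b2 :: "'g \<Rightarrow> 'y2::polish_space \<Rightarrow> 'y2" and N2 :: "'y2 measure"
  assumes X: "mp_action a M" and Y: "mp_action b N" and Z: "mp_action c T"
    and X1: "mp_action a1 M1" and X2: "mp_action a2 M2"
    and Y1: "mp_action b1 N1" and Y2: "mp_action b2 N2"
  shows
    "(proj_contained a M b N \<and> proj_contained b N c T \<longrightarrow> proj_contained a M c T) \<and>
     (inf_contained a M b N \<and> proj_contained b N c T \<longrightarrow> inf_contained a M c T) \<and>
     (weakly_contained a M b N \<and> inf_contained b N c T \<longrightarrow> inf_contained a M c T) \<and>
     (ergodic_action a M \<and> emeasure M (space M) = \<infinity> \<and> prob_space N \<and>
        proj_contained a M b N \<and> inf_contained b N c T \<longrightarrow> proj_contained a M c T) \<and>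
     (proj_contained a1 M1 b1 N1 \<and> proj_contained a2 M2 b2 N2 \<longrightarrow>
        proj_contained (diag_action a1 a2) (M1 \<Otimes>\<^sub>M M2) (diag_action b1 b2) (N1 \<Otimes>\<^sub>M N2))"
proof -
  have P1: "proj_contained a M b N \<and> proj_contained b N c T \<longrightarrow> proj_contained a M c T"
    using part1[OF X Y] by blast
  have P2: "inf_contained a M b N \<and> proj_contained b N c T \<longrightarrow> inf_contained a M c T"
    using part2[OF X Y] by blast
  have P3: "weakly_contained a M b N \<and> inf_contained b N c T \<longrightarrow> inf_contained a M c T"
    using part3[OF X Y] by blast
  have P4: "ergodic_action a M \<and> emeasure M (space M) = \<infinity> \<and> prob_space N \<and>
        proj_contained a M b N \<and> inf_contained b N c T \<longrightarrow> proj_contained a M c T"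
    using part4[OF X Y] by blast
  have P5: "proj_contained a1 M1 b1 N1 \<and> proj_contained a2 M2 b2 N2 \<longrightarrow>
        proj_contained (diag_action a1 a2) (M1 \<Otimes>\<^sub>M M2) (diag_action b1 b2) (N1 \<Otimes>\<^sub>M N2)"
    using part5[OF mp_mpa[OF X1] mp_mpa[OF X2] mp_mpa[OF Y1] mp_mpa[OF Y2]] by blast
  show ?thesis using P1 P2 P3 P4 P5 by blast
qed

end
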